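(* Let $k$ be a field of characteristic $0$ and let $\mathcal L$ be an fgc centreless Lie torus of type $(\Delta,\Lambda)$ over $k$. Then $\mathfrak h=\mathcal L_0^0$ is a maximal split toral $k$-subalgebra of $\mathcal L$.
   Context: An irreducible finite root system is a finite subset $\Delta$ of a finite-dimensional vector space with $0\in\Delta$ and $\Delta^\times:=\Delta\setminus\{0\}$ an irreducible (possibly non-reduced) root system in the usual sense; $Q=\mathrm{span}_{\mathbb Z}\Delta$, $\alpha^\vee$ coroots, $\Delta^\times_{\mathrm{ind}}=\Delta^\times\setminus2\Delta^\times$. Let $\Lambda$ be a finitely generated free abelian group. A Lie torus of type $(\Delta,\Lambda)$ is a Lie algebra $\mathcal L$ over $k$ with a $Q\times\Lambda$-grading $\mathcal L=\bigoplus\mathcal L_\alpha^\lambda$ ($\mathcal L_\alpha:=\bigoplus_\lambda\mathcal L_\alpha^\lambda$, $\mathcal L^\lambda:=\bigoplus_\alpha\mathcal L_\alpha^\lambda$) such that: (LT1) $\{\alpha:\mathcal L_\alpha\neq0\}=\Delta$; (LT2)(i) $\mathcal L_\alpha^0\neq0$ for $\alpha\in\Delta^\times_{\mathrm{ind}}$; (ii) whenever $\alpha\in\Delta^\times$ and $\mathcal L_\alpha^\lambda\ne0$ there are $e\in\mathcal L_\alpha^\lambda$, $f\in\mathcal L_{-\alpha}^{-\lambda}$ with $\mathcal L_\alpha^\lambda=ke$, $\mathcal L_{-\alpha}^{-\lambda}=kf$, $[[e,f],x]=\langle\beta,\alpha^\vee\rangle x$ for $x\in\mathcal L_\beta$,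 $\beta\in Q$; (LT3) $\mathcal L$ is generated by the $\mathcal L_\alpha$, $\alpha\in\Delta^\times$; (LT4) $\Lambda$ is generated by $\{\lambda:\mathcal L^\lambda\ne0\}$. Centroid $C=\{c\in\mathrm{End}_k\mathcal L:c[x,y]=[cx,y]=[x,cy]\}$; fgc = finitely generated as $C$-module; centreless = zero centre. A split toral $k$-subalgebra is an abelian subalgebra $\mathfrak t$ such that $\mathcal L$ has a $k$-basis of simultaneous eigenvectors of all $\mathrm{ad}(t)$, $t\in\mathfrak t$, with eigenvalues in $k$. *)

theory Defs
  imports "HOL-Analysis.Analysis" "HOL-Library.Function_Algebras"
begin

text \<open>Cartan integer (beta, alpha-coroot) = 2 (beta . alpha)/(alpha . alpha), realised for the
  Euclidean inner product of the ambient space; for beta in Q and alpha a root it is an integer.\<close>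
definition coroot_pair :: "'r::euclidean_space \<Rightarrow> 'r \<Rightarrow> int" where
  "coroot_pair \<beta> \<alpha> = \<lfloor>2 * (\<beta> \<bullet> \<alpha>) / (\<alpha> \<bullet> \<alpha>)\<rfloor>"

text \<open>Root system in the usual (Bourbaki) sense, possibly non-reduced, with respect to the
  inner product of the ambient Euclidean space.\<close>
definition root_system :: "'r::euclidean_space set \<Rightarrow> bool" where
  "root_system R \<longleftrightarrow> finite R \<and> 0 \<notin> R \<and> span R = UNIV \<and>
     (\<forall>\<alpha>\<in>R. \<forall>\<beta>\<in>R. 2 * (\<beta> \<bullet> \<alpha>) / (\<alpha> \<bullet> \<alpha>) \<in> \<int> \<and>
        \<beta> - (2 * (\<beta> \<bullet> \<alpha>) / (\<alpha> \<bullet> \<alpha>)) *\<^sub>R \<alpha> \<in> R)"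

definition irreducible_root_system :: "'r::euclidean_space set \<Rightarrow> bool" where
  "irreducible_root_system R \<longleftrightarrow> root_system R \<and> R \<noteq> {} \<and>
     \<not> (\<exists>A B. A \<noteq> {} \<and> B \<noteq> {} \<and> A \<union> B = R \<and> A \<inter> B = {} \<and>
            (\<forall>a\<in>A. \<forall>b\<in>B. a \<bullet> b = 0))"

definition irreducible_finite_root_system :: "'r::euclidean_space set \<Rightarrow> bool" where
  "irreducible_finite_root_system \<Delta> \<longleftrightarrow> 0 \<in> \<Delta> \<and> irreducible_root_system (\<Delta> - {0})"

definition int_span :: "'g::ab_group_add set \<Rightarrow> 'g set" where
  "int_span S = \<Inter>{H. 0 \<in> H \<and> S \<subseteq> H \<and> (\<forall>x\<in>H. \<forall>y\<in>H. x + y \<in> H) \<and> (\<forall>x\<in>H. - x \<in> H)}"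

text \<open>Lambda is modelled as Z^n, i.e. functions nat => int supported in {..<n}.\<close>
definition lattice_Zn :: "nat \<Rightarrow> (nat \<Rightarrow> int) set" where
  "lattice_Zn n = {f. \<forall>i\<ge>n. f i = 0}"

definition lie_algebra :: "('k::field \<Rightarrow> 'L::ab_group_add \<Rightarrow> 'L) \<Rightarrow> ('L \<Rightarrow> 'L \<Rightarrow> 'L) \<Rightarrow> bool" where
  "lie_algebra smul br \<longleftrightarrow> vector_space smul \<and>
     (\<forall>x. Vector_Spaces.linear smul smul (br x)) \<and>
     (\<forall>y. Vector_Spaces.linear smul smul (\<lambda>x. br x y)) \<and>
     (\<forall>x. br x x = 0) \<and>
     (\<forall>x y z. br x (br y z) + br y (br z x) + br z (br x y) = 0)"

definition lie_generated :: "('k::field \<Rightarrow> 'L::ab_group_add \<Rightarrow> 'L) \<Rightarrow> ('L \<Rightarrow> 'L \<Rightarrow> 'L) \<Rightarrow> 'L set \<Rightarrow> 'L set" where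
  "lie_generated smul br S = \<Inter>{M. module.subspace smul M \<and> S \<subseteq> M \<and> (\<forall>x\<in>M. \<forall>y\<in>M. br x y \<in> M)}"

definition centroid :: "('k::field \<Rightarrow> 'L::ab_group_add \<Rightarrow> 'L) \<Rightarrow> ('L \<Rightarrow> 'L \<Rightarrow> 'L) \<Rightarrow> ('L \<Rightarrow> 'L) set" where
  "centroid smul br = {c. Vector_Spaces.linear smul smul c \<and>
      (\<forall>x y. c (br x y) = br (c x) y \<and> c (br x y) = br x (c y))}"

definition fgc :: "('k::field \<Rightarrow> 'L::ab_group_add \<Rightarrow> 'L) \<Rightarrow> ('L \<Rightarrow> 'L \<Rightarrow> 'L) \<Rightarrow> bool" where
  "fgc smul br \<longleftrightarrow> (\<exists>X. finite X \<and> (\<forall>x. \<exists>c. (\<forall>y\<in>X. c y \<in> centroid smul br) \<and>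
       x = (\<Sum>y\<in>X. c y y)))"

definition centreless :: "('L::ab_group_add \<Rightarrow> 'L \<Rightarrow> 'L) \<Rightarrow> bool" where
  "centreless br \<longleftrightarrow> (\<forall>z. (\<forall>x. br z x = 0) \<longrightarrow> z = 0)"

definition split_toral :: "('k::field \<Rightarrow> 'L::ab_group_add \<Rightarrow> 'L) \<Rightarrow> ('L \<Rightarrow> 'L \<Rightarrow> 'L) \<Rightarrow> 'L set \<Rightarrow> bool" where
  "split_toral smul br T \<longleftrightarrow> module.subspace smul T \<and>
     (\<forall>a\<in>T. \<forall>b\<in>T. br a b = 0) \<and>
     (\<exists>B. \<not> module.dependent smul B \<and> module.span smul B = UNIV \<and>
          (\<forall>b\<in>B. \<forall>t\<in>T. \<exists>c. br t b = smul c b))"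

definition maximal_split_toral :: "('k::field \<Rightarrow> 'L::ab_group_add \<Rightarrow> 'L) \<Rightarrow> ('L \<Rightarrow> 'L \<Rightarrow> 'L) \<Rightarrow> 'L set \<Rightarrow> bool" where
  "maximal_split_toral smul br T \<longleftrightarrow> split_toral smul br T \<and>
     (\<forall>T'. split_toral smul br T' \<and> T \<subseteq> T' \<longrightarrow> T' = T)"

text \<open>G a l is the homogeneous component L_a^l; Q x Lambda grading.\<close>
definition QL_graded :: "('k::field \<Rightarrow> 'L::ab_group_add \<Rightarrow> 'L) \<Rightarrow> ('L \<Rightarrow> 'L \<Rightarrow> 'L) \<Rightarrow>
     'r::euclidean_space set \<Rightarrow> nat \<Rightarrow> ('r \<Rightarrow> (nat \<Rightarrow> int) \<Rightarrow> 'L set) \<Rightarrow> bool" where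
  "QL_graded smul br \<Delta> n G \<longleftrightarrow>
     (\<forall>a l. module.subspace smul (G a l)) \<and>
     (\<forall>a l. (a \<notin> int_span \<Delta> \<or> l \<notin> lattice_Zn n) \<longrightarrow> G a l = {0}) \<and>
     module.span smul (\<Union>a l. G a l) = UNIV \<and>
     (\<forall>S x. finite S \<and> (\<forall>i\<in>S. x i \<in> G (fst i) (snd i)) \<and> (\<Sum>i\<in>S. x i) = 0 \<longrightarrow>
            (\<forall>i\<in>S. x i = 0)) \<and>
     (\<forall>a l b m. \<forall>x\<in>G a l. \<forall>y\<in>G b m. br x y \<in> G (a + b) (l + m))"

definition root_space :: "('k::field \<Rightarrow> 'L::ab_group_add \<Rightarrow> 'L) \<Rightarrow> ('r \<Rightarrow> (nat \<Rightarrow> int) \<Rightarrow> 'L set) \<Rightarrow> 'r \<Rightarrow> 'L set" where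
  "root_space smul G a = module.span smul (\<Union>l. G a l)"

definition degree_space :: "('k::field \<Rightarrow> 'L::ab_group_add \<Rightarrow> 'L) \<Rightarrow> ('r \<Rightarrow> (nat \<Rightarrow> int) \<Rightarrow> 'L set) \<Rightarrow> (nat \<Rightarrow> int) \<Rightarrow> 'L set" where
  "degree_space smul G l = module.span smul (\<Union>a. G a l)"

definition lie_torus :: "('k::field \<Rightarrow> 'L::ab_group_add \<Rightarrow> 'L) \<Rightarrow> ('L \<Rightarrow> 'L \<Rightarrow> 'L) \<Rightarrow>
     'r::euclidean_space set \<Rightarrow> nat \<Rightarrow> ('r \<Rightarrow> (nat \<Rightarrow> int) \<Rightarrow> 'L set) \<Rightarrow> bool" where
  "lie_torus smul br \<Delta> n G \<longleftrightarrow>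
     lie_algebra smul br \<and> irreducible_finite_root_system \<Delta> \<and> QL_graded smul br \<Delta> n G \<and>
     \<comment> \<open>LT1\<close>
     {a. root_space smul G a \<noteq> {0}} = \<Delta> \<and>
     \<comment> \<open>LT2 (i)\<close>
     (\<forall>a\<in>\<Delta> - {0}. a \<notin> (\<lambda>x. 2 *\<^sub>R x) ` (\<Delta> - {0}) \<longrightarrow> G a 0 \<noteq> {0}) \<and>
     \<comment> \<open>LT2 (ii)\<close>
     (\<forall>a\<in>\<Delta> - {0}. \<forall>l. G a l \<noteq> {0} \<longrightarrow>
        (\<exists>e\<in>G a l. \<exists>f\<in>G (- a) (- l).
            G a l = range (\<lambda>c. smul c e) \<and> G (- a) (- l) = range (\<lambda>c. smul c f) \<and>
            (\<forall>b\<in>int_span \<Delta>. \<forall>x\<in>root_space smul G b.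
                br (br e f) x = smul (of_int (coroot_pair b a)) x))) \<and>
     \<comment> \<open>LT3\<close>
     lie_generated smul br (\<Union>a\<in>\<Delta> - {0}. root_space smul G a) = UNIV \<and>
     \<comment> \<open>LT4\<close>
     int_span {l. degree_space smul G l \<noteq> {0}} = lattice_Zn n"

end

theory Submission
  imports Defs
begin

locale LTctx =
  fixes smul :: "'k::field_char_0 \<Rightarrow> 'L::ab_group_add \<Rightarrow> 'L"
    and br :: "'L \<Rightarrow> 'L \<Rightarrow> 'L"
    and \<Delta> :: "'r::euclidean_space set" and n :: nat
    and G :: "'r \<Rightarrow> (nat \<Rightarrow> int) \<Rightarrow> 'L set"
  assumes LT: "lie_torus smul br \<Delta> n G"
begin

lemma lie: "lie_algebra smul br" using LT unfolding lie_torus_def by blast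
lemma vs: "vector_space smul" using lie unfolding lie_algebra_def by blast

sublocale V: vector_space smul by (rule vs)

lemma br_lin_r: "Vector_Spaces.linear smul smul (br x)" using lie unfolding lie_algebra_def by blast
lemma br_lin_l: "Vector_Spaces.linear smul smul (\<lambda>x. br x y)" using lie unfolding lie_algebra_def by blast

lemma br_add_r: "br x (y + z) = br x y + br x z"
  using br_lin_r[of x] unfolding Vector_Spaces.linear_iff by simp
lemma br_add_l: "br (x + y) z = br x z + br y z"
  using br_lin_l[of z] unfolding Vector_Spaces.linear_iff by simp
lemma br_smul_r: "br x (smul c y) = smul c (br x y)"
  using br_lin_r[of x] unfolding Vector_Spaces.linear_iff_module_hom by (rule module_hom.scale)
lemma br_smul_l: "br (smul c x) y = smul c (br x y)"
  using br_lin_l[of y] unfolding Vector_Spaces.linear_iff_module_hom by (rule module_hom.scale)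
lemma br_0_r[simp]: "br x 0 = 0"
  using br_add_r[of x 0 0] by simp
lemma br_0_l[simp]: "br 0 x = 0"
  using br_add_l[of 0 0 x] by simp
lemma br_neg_r: "br x (- y) = - br x y"
proof -
  have "br x y + br x (-y) = 0" using br_add_r[of x y "-y"] by simp
  then show ?thesis by (rule minus_unique[symmetric])
qed
lemma br_neg_l: "br (- x) y = - br x y"
proof -
  have "br x y + br (-x) y = 0" using br_add_l[of x "-x" y] by simp
  then show ?thesis by (rule minus_unique[symmetric])
qed
lemma br_diff_r: "br x (y - z) = br x y - br x z"
  using br_add_r[of x y "-z"] br_neg_r[of x z] by simp
lemma br_diff_l: "br (x - y) z = br x z - br y z"
  using br_add_l[of x "-y" z] br_neg_l[of y z] by simp
lemma br_sum_r: "br x (sum f S) = (\<Sum>i\<in>S. br x (f i))"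
  by (induction S rule: infinite_finite_induct) (auto simp: br_add_r)
lemma br_sum_l: "br (sum f S) y = (\<Sum>i\<in>S. br (f i) y)"
  by (induction S rule: infinite_finite_induct) (auto simp: br_add_l)
lemma br_self[simp]: "br x x = 0" using lie unfolding lie_algebra_def by blast
lemma br_anti: "br x y = - br y x"
proof -
  have "0 = br x (x+y) + br y (x+y)" using br_add_l[of x y "x+y"] by simp
  also have "\<dots> = br x y + br y x" by (simp add: br_add_r)
  finally have "br y x + br x y = 0" by (simp add: add.commute)
  then show ?thesis by (rule minus_unique[symmetric])
qed
lemma jacobi: "br x (br y z) + br y (br z x) + br z (br x y) = 0"
  using lie unfolding lie_algebra_def by blast
lemma jac: "br a (br b c) = br (br a b) c + br b (br a c)"
proof -
  have "br a (br b c) + br b (br c a) + br c (br a b) = 0" by (rule jacobi)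
  moreover have "br b (br c a) = - br b (br a c)" by (metis br_anti br_neg_r)
  moreover have "br c (br a b) = - br (br a b) c" by (metis br_anti)
  ultimately show ?thesis by (simp add: algebra_simps eq_neg_iff_add_eq_0)
qed


lemmas LTu = LT[unfolded lie_torus_def]
lemma QLg: "QL_graded smul br \<Delta> n G" using LTu by (elim conjE)
lemma irr: "irreducible_finite_root_system \<Delta>" using LTu by (elim conjE)
lemmas QLu = QLg[unfolded QL_graded_def]
lemma G_sub: "V.subspace (G a l)" using QLu by (elim conjE) blast
lemma G_out: "a \<notin> int_span \<Delta> \<or> l \<notin> lattice_Zn n \<Longrightarrow> G a l = {0}"
  using QLu by (elim conjE) blast
lemma G_span: "V.span (\<Union>a l. G a l) = UNIV" using QLu by (elim conjE)
lemma G_indep_all: "\<forall>S x. finite S \<and> (\<forall>i\<in>S. x i \<in> G (fst i) (snd i)) \<and> (\<Sum>i\<in>S. x i) = 0 \<longrightarrow>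
            (\<forall>i\<in>S. x i = 0)"
  using QLu by (elim conjE)
lemma G_indep: "finite S \<Longrightarrow> (\<forall>i\<in>S. x i \<in> G (fst i) (snd i)) \<Longrightarrow> sum x S = 0 \<Longrightarrow> i \<in> S \<Longrightarrow> x i = 0"
  using G_indep_all by blast
lemma G_br_all: "\<forall>a l b m. \<forall>x\<in>G a l. \<forall>y\<in>G b m. br x y \<in> G (a + b) (l + m)"
  using QLu by (elim conjE)
lemma G_br: "x \<in> G a l \<Longrightarrow> y \<in> G b m \<Longrightarrow> br x y \<in> G (a + b) (l + m)"
  using G_br_all by blast
lemma LT1: "{a. root_space smul G a \<noteq> {0}} = \<Delta>" using LTu by (elim conjE)
lemma LT2all: "\<forall>a\<in>\<Delta> - {0}. \<forall>l. G a l \<noteq> {0} \<longrightarrow>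
        (\<exists>e\<in>G a l. \<exists>f\<in>G (- a) (- l).
            G a l = range (\<lambda>c. smul c e) \<and> G (- a) (- l) = range (\<lambda>c. smul c f) \<and>
            (\<forall>b\<in>int_span \<Delta>. \<forall>x\<in>root_space smul G b.
                br (br e f) x = smul (of_int (coroot_pair b a)) x))"
  using LTu by (elim conjE)
lemma LT2: "a \<in> \<Delta> - {0} \<Longrightarrow> G a l \<noteq> {0} \<Longrightarrow>
        (\<exists>e\<in>G a l. \<exists>f\<in>G (- a) (- l).
            G a l = range (\<lambda>c. smul c e) \<and> G (- a) (- l) = range (\<lambda>c. smul c f) \<and>
            (\<forall>b\<in>int_span \<Delta>. \<forall>x\<in>root_space smul G b.
                br (br e f) x = smul (of_int (coroot_pair b a)) x))"
  using LT2all by blast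
lemma LT3: "lie_generated smul br (\<Union>a\<in>\<Delta> - {0}. root_space smul G a) = UNIV"
  using LTu by (elim conjE)

lemma G_0[simp]: "0 \<in> G a l" using V.subspace_0[OF G_sub] .
lemma G_add: "x \<in> G a l \<Longrightarrow> y \<in> G a l \<Longrightarrow> x + y \<in> G a l" using V.subspace_add[OF G_sub] .
lemma G_smul: "x \<in> G a l \<Longrightarrow> smul c x \<in> G a l" using V.subspace_scale[OF G_sub] .
lemma G_diff: "x \<in> G a l \<Longrightarrow> y \<in> G a l \<Longrightarrow> x - y \<in> G a l" using V.subspace_diff[OF G_sub] .
lemma G_neg: "x \<in> G a l \<Longrightarrow> - x \<in> G a l" using V.subspace_neg[OF G_sub] .
lemma G_root: "x \<in> G a l \<Longrightarrow> x \<in> root_space smul G a"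
  unfolding root_space_def by (rule V.span_base) blast
lemma G_notin: assumes "a \<notin> \<Delta>" shows "G a l = {0}"
proof -
  have "root_space smul G a = {0}" using LT1 assms by blast
  then show ?thesis using G_root[of _ a l] by auto
qed

lemma int_span_mem: "x \<in> int_span S \<longleftrightarrow> (\<forall>H. 0 \<in> H \<and> S \<subseteq> H \<and> (\<forall>x\<in>H. \<forall>y\<in>H. x + y \<in> H) \<and> (\<forall>x\<in>H. - x \<in> H) \<longrightarrow> x \<in> H)"
  unfolding int_span_def by blast
lemma int_span_0: "0 \<in> int_span S" unfolding int_span_mem by blast
lemma int_span_base: "x \<in> S \<Longrightarrow> x \<in> int_span S" unfolding int_span_mem by blast
lemma int_span_add: "x \<in> int_span S \<Longrightarrow> y \<in> int_span S \<Longrightarrow> x + y \<in> int_span S" unfolding int_span_mem by blast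
lemma int_span_neg: "x \<in> int_span S \<Longrightarrow> - x \<in> int_span S" unfolding int_span_mem by blast
lemma int_span_minimal: "0 \<in> H \<Longrightarrow> S \<subseteq> H \<Longrightarrow> (\<forall>x\<in>H. \<forall>y\<in>H. x + y \<in> H) \<Longrightarrow> (\<forall>x\<in>H. - x \<in> H) \<Longrightarrow> int_span S \<subseteq> H"
  unfolding int_span_def by blast

definition dec :: "'L \<Rightarrow> ('r \<times> (nat \<Rightarrow> int)) set \<Rightarrow> ('r \<times> (nat \<Rightarrow> int) \<Rightarrow> 'L) \<Rightarrow> bool" where
  "dec x S c \<longleftrightarrow> finite S \<and> (\<forall>i\<in>S. c i \<in> G (fst i) (snd i)) \<and> x = sum c S"

lemma sum_ext: assumes "finite T" "S \<subseteq> T" shows "(\<Sum>i\<in>T. if i \<in> S then c i else 0) = sum c S"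
proof -
  have "T \<inter> S = S" using assms by blast
  then show ?thesis using sum.inter_restrict[OF assms(1), of c S] by simp
qed

lemma dec_exists: "\<exists>S c. dec x S c"
proof -
  let ?P = "{x. \<exists>S c. dec x S c}"
  have sub: "V.subspace ?P"
  proof (rule V.subspaceI)
    show "0 \<in> ?P" by (auto simp: dec_def intro!: exI[of _ "{}"])
  next
    fix x y assume "x \<in> ?P" "y \<in> ?P"
    then obtain S c S' c' where d: "dec x S c" "dec y S' c'" by blast
    define c'' where "c'' i = (if i \<in> S then c i else 0) + (if i \<in> S' then c' i else 0)" for i
    have "dec (x + y) (S \<union> S') c''"
      using d unfolding dec_def c''_def
      by (auto simp: sum.distrib sum_ext intro!: G_add)
    then show "x + y \<in> ?P" by blast
  next
    fix k x assume "x \<in> ?P"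
    then obtain S c where d: "dec x S c" by blast
    have "dec (smul k x) S (\<lambda>i. smul k (c i))"
      using d unfolding dec_def by (auto simp: V.scale_sum_right intro!: G_smul)
    then show "smul k x \<in> ?P" by blast
  qed
  have "(\<Union>a l. G a l) \<subseteq> ?P"
  proof
    fix x assume "x \<in> (\<Union>a l. G a l)"
    then obtain a l where "x \<in> G a l" by blast
    then have "dec x {(a,l)} (\<lambda>_. x)" unfolding dec_def by auto
    then show "x \<in> ?P" by blast
  qed
  then have "V.span (\<Union>a l. G a l) \<subseteq> ?P" using V.span_minimal sub by blast
  then show ?thesis using G_span by blast
qed

lemma dec_unique:
  assumes "dec x S c" "dec x S' c'"
  shows "(if i \<in> S then c i else 0) = (if i \<in> S' then c' i else 0)"
proof -
  define d where "d j = (if j \<in> S then c j else 0) - (if j \<in> S' then c' j else 0)" for j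
  have fin: "finite (S \<union> S')" using assms unfolding dec_def by auto
  have "sum d (S \<union> S') = sum c S - sum c' S'"
    unfolding d_def using fin by (simp add: sum_subtractf sum_ext)
  also have "\<dots> = 0" using assms unfolding dec_def by simp
  finally have z: "sum d (S \<union> S') = 0" .
  have mem: "\<forall>j\<in>S \<union> S'. d j \<in> G (fst j) (snd j)"
  proof
    fix j assume "j \<in> S \<union> S'"
    have "(if j \<in> S then c j else 0) \<in> G (fst j) (snd j)" using assms unfolding dec_def by auto
    moreover have "(if j \<in> S' then c' j else 0) \<in> G (fst j) (snd j)" using assms unfolding dec_def by auto
    ultimately show "d j \<in> G (fst j) (snd j)" unfolding d_def by (rule G_diff)
  qed
  show ?thesis
  proof (cases "i \<in> S \<union> S'")
    case True
    then have "d i = 0" using G_indep[OF fin mem z] by blast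
    then show ?thesis unfolding d_def by simp
  next
    case False then show ?thesis by simp
  qed
qed

definition proj :: "'r \<times> (nat \<Rightarrow> int) \<Rightarrow> 'L \<Rightarrow> 'L" where
  "proj i x = (THE y. \<exists>S c. dec x S c \<and> y = (if i \<in> S then c i else 0))"

lemma proj_eq: assumes "dec x S c" shows "proj i x = (if i \<in> S then c i else 0)"
  unfolding proj_def
proof (rule the_equality)
  show "\<exists>S' c'. dec x S' c' \<and> (if i \<in> S then c i else 0) = (if i \<in> S' then c' i else 0)"
    using assms by blast
next
  fix y assume "\<exists>S' c'. dec x S' c' \<and> y = (if i \<in> S' then c' i else 0)"
  then show "y = (if i \<in> S then c i else 0)" using dec_unique[OF assms] by metis
qed

lemma proj_mem: "proj i x \<in> G (fst i) (snd i)"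
proof -
  obtain S c where d: "dec x S c" using dec_exists by blast
  show ?thesis using proj_eq[OF d] d unfolding dec_def by auto
qed

definition supp :: "'L \<Rightarrow> ('r \<times> (nat \<Rightarrow> int)) set" where
  "supp x = {i. proj i x \<noteq> 0}"

lemma supp_finite: "finite (supp x)"
proof -
  obtain S c where d: "dec x S c" using dec_exists by blast
  have "supp x \<subseteq> S" using proj_eq[OF d] unfolding supp_def by auto
  then show ?thesis using d unfolding dec_def by (auto intro: finite_subset)
qed

lemma decomp: assumes "finite T" "supp x \<subseteq> T" shows "x = (\<Sum>i\<in>T. proj i x)"
proof -
  obtain S c where d: "dec x S c" using dec_exists by blast
  have fS: "finite S" using d unfolding dec_def by auto
  have "x = sum c S" using d unfolding dec_def by auto
  also have "\<dots> = (\<Sum>i\<in>S. proj i x)" using proj_eq[OF d] by simp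
  also have "\<dots> = (\<Sum>i\<in>S \<union> T. proj i x)"
    by (rule sum.mono_neutral_right[symmetric]) (use fS assms proj_eq[OF d] in \<open>auto simp: supp_def\<close>)
  also have "\<dots> = (\<Sum>i\<in>T. proj i x)"
    by (rule sum.mono_neutral_left[symmetric]) (use fS assms in \<open>auto simp: supp_def\<close>)
  finally show ?thesis .
qed

lemma decomp_supp: "x = (\<Sum>i\<in>supp x. proj i x)"
  by (rule decomp[OF supp_finite subset_refl])

lemma proj_sumG: assumes "finite S" "\<forall>i\<in>S. c i \<in> G (fst i) (snd i)"
  shows "proj j (sum c S) = (if j \<in> S then c j else 0)"
  by (rule proj_eq) (use assms in \<open>auto simp: dec_def\<close>)

lemma proj_G: assumes "x \<in> G a l" shows "proj i x = (if i = (a, l) then x else 0)"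
  using proj_sumG[of "{(a,l)}" "\<lambda>_. x" i] assms by auto

lemma proj_add: "proj i (x + y) = proj i x + proj i y"
proof -
  let ?T = "supp x \<union> supp y"
  have f: "finite ?T" using supp_finite by auto
  have e: "x + y = (\<Sum>j\<in>?T. proj j x + proj j y)"
    using decomp[OF f, of x] decomp[OF f, of y] by (auto simp: sum.distrib)
  have m: "\<forall>j\<in>?T. proj j x + proj j y \<in> G (fst j) (snd j)" using proj_mem G_add by blast
  have "proj i (x + y) = (if i \<in> ?T then proj i x + proj i y else 0)"
    by (subst e) (rule proj_sumG[OF f m])
  then show ?thesis by (auto simp: supp_def)
qed

lemma proj_smul: "proj i (smul k x) = smul k (proj i x)"
proof -
  have f: "finite (supp x)" by (rule supp_finite)
  have e: "smul k x = (\<Sum>j\<in>supp x. smul k (proj j x))"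
    using decomp_supp[of x] by (metis V.scale_sum_right)
  have m: "\<forall>j\<in>supp x. smul k (proj j x) \<in> G (fst j) (snd j)" using proj_mem G_smul by blast
  have "proj i (smul k x) = (if i \<in> supp x then smul k (proj i x) else 0)"
    by (subst e) (rule proj_sumG[OF f m])
  then show ?thesis by (auto simp: supp_def)
qed

lemma proj_0[simp]: "proj i 0 = 0" using proj_smul[of i 0 0] by simp
lemma proj_neg: "proj i (- x) = - proj i x"
proof -
  have "proj i x + proj i (-x) = 0" using proj_add[of i x "-x"] by simp
  then show ?thesis by (rule minus_unique[symmetric])
qed
lemma proj_diff: "proj i (x - y) = proj i x - proj i y"
  using proj_add[of i x "-y"] proj_neg[of i y] by simp
lemma proj_sum: "proj i (sum f S) = (\<Sum>j\<in>S. proj i (f j))"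
  by (induction S rule: infinite_finite_induct) (auto simp: proj_add)

lemma eq_proj: "(\<forall>i. proj i x = proj i y) \<Longrightarrow> x = y"
proof -
  assume a: "\<forall>i. proj i x = proj i y"
  have "supp x = supp y" using a unfolding supp_def by auto
  then show "x = y" using decomp_supp[of x] decomp_supp[of y] a by simp
qed

lemma zero_proj: "(\<forall>i. proj i x = 0) \<Longrightarrow> x = 0"
  using eq_proj[of x 0] by simp


lemma R_rs: "root_system (\<Delta> - {0})"
  using irr unfolding irreducible_finite_root_system_def irreducible_root_system_def by blast
lemma zero_in_Delta: "0 \<in> \<Delta>"
  using irr unfolding irreducible_finite_root_system_def by blast
lemma Delta_finite: "finite \<Delta>"
proof -
  have "finite (\<Delta> - {0})" using R_rs unfolding root_system_def by blast
  then show ?thesis by (metis finite_Diff2 finite.emptyI finite_insert)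
qed
lemma R_span: "span (\<Delta> - {0}) = UNIV" using R_rs unfolding root_system_def by blast
lemma R_int: "\<alpha> \<in> \<Delta> - {0} \<Longrightarrow> \<beta> \<in> \<Delta> - {0} \<Longrightarrow> 2 * (\<beta> \<bullet> \<alpha>) / (\<alpha> \<bullet> \<alpha>) \<in> \<int>"
  using R_rs unfolding root_system_def by blast

lemma cp_int: assumes "b \<in> int_span \<Delta>" "\<alpha> \<in> \<Delta> - {0}" shows "2 * (b \<bullet> \<alpha>) / (\<alpha> \<bullet> \<alpha>) \<in> \<int>"
proof -
  let ?H = "{b. \<forall>\<alpha>\<in>\<Delta> - {0}. 2 * (b \<bullet> \<alpha>) / (\<alpha> \<bullet> \<alpha>) \<in> \<int>}"
  have "int_span \<Delta> \<subseteq> ?H"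
  proof (rule int_span_minimal)
    show "0 \<in> ?H" by simp
    show "\<Delta> \<subseteq> ?H"
    proof
      fix x assume "x \<in> \<Delta>"
      then show "x \<in> ?H" using R_int by (cases "x = 0") auto
    qed
    show "\<forall>x\<in>?H. \<forall>y\<in>?H. x + y \<in> ?H"
    proof (intro ballI CollectI)
      fix x y \<alpha> assume "x \<in> ?H" "y \<in> ?H" "\<alpha> \<in> \<Delta> - {0}"
      then have "2 * (x \<bullet> \<alpha>) / (\<alpha> \<bullet> \<alpha>) + 2 * (y \<bullet> \<alpha>) / (\<alpha> \<bullet> \<alpha>) \<in> \<int>" by auto
      then show "2 * ((x + y) \<bullet> \<alpha>) / (\<alpha> \<bullet> \<alpha>) \<in> \<int>" by (simp add: inner_add_left add_divide_distrib distrib_left)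
    qed
    show "\<forall>x\<in>?H. - x \<in> ?H"
    proof (intro ballI CollectI)
      fix x \<alpha> assume "x \<in> ?H" "\<alpha> \<in> \<Delta> - {0}"
      then have "- (2 * (x \<bullet> \<alpha>) / (\<alpha> \<bullet> \<alpha>)) \<in> \<int>" by auto
      then show "2 * ((- x) \<bullet> \<alpha>) / (\<alpha> \<bullet> \<alpha>) \<in> \<int>" by simp
    qed
  qed
  then show ?thesis using assms by blast
qed

lemma cp_zero_imp: assumes "b \<in> int_span \<Delta>" "\<alpha> \<in> \<Delta> - {0}" "coroot_pair b \<alpha> = 0"
  shows "b \<bullet> \<alpha> = 0"
proof -
  obtain z where z: "2 * (b \<bullet> \<alpha>) / (\<alpha> \<bullet> \<alpha>) = of_int z" using cp_int[OF assms(1,2)] Ints_cases by metis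
  then have "z = 0" using assms(3) unfolding coroot_pair_def by simp
  moreover have "\<alpha> \<bullet> \<alpha> \<noteq> 0" using assms(2) by simp
  ultimately show ?thesis using z by simp
qed

lemma cp_all_zero: assumes "b \<in> int_span \<Delta>" "\<forall>\<alpha>\<in>\<Delta> - {0}. coroot_pair b \<alpha> = 0" shows "b = 0"
proof -
  have "orthogonal b b"
  proof (rule orthogonal_to_span)
    show "b \<in> span (\<Delta> - {0})" using R_span by simp
    fix y assume "y \<in> \<Delta> - {0}"
    then show "orthogonal b y" using cp_zero_imp assms unfolding orthogonal_def by blast
  qed
  then show ?thesis by (simp add: orthogonal_self)
qed

lemma cp_0[simp]: "coroot_pair 0 \<alpha> = 0" unfolding coroot_pair_def by simp
lemma cp_self: "\<alpha> \<noteq> 0 \<Longrightarrow> coroot_pair \<alpha> \<alpha> = 2" unfolding coroot_pair_def by simp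
lemma cp_neg_self: "\<alpha> \<noteq> 0 \<Longrightarrow> coroot_pair (- \<alpha>) \<alpha> = - 2" unfolding coroot_pair_def by simp


section \<open>The Cartan part acts by scalars\<close>

lemma rs_out: assumes "b \<notin> int_span \<Delta>" shows "root_space smul G b = {0}"
proof -
  have "(\<Union>l. G b l) = {0}" using G_out assms by auto
  then show ?thesis unfolding root_space_def by simp
qed

definition Scal :: "'L set" where
  "Scal = {s. \<forall>b. \<exists>c. (b = 0 \<longrightarrow> c = 0) \<and> (\<forall>x\<in>root_space smul G b. br s x = smul c x)}"

lemma Scal_sub: "V.subspace Scal"
proof (rule V.subspaceI)
  show "0 \<in> Scal" unfolding Scal_def by (auto intro!: exI[of _ 0])
next
  fix x y assume xy: "x \<in> Scal" "y \<in> Scal"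
  show "x + y \<in> Scal" unfolding Scal_def
  proof (intro CollectI allI)
    fix b
    obtain c1 where c1: "b = 0 \<longrightarrow> c1 = 0" "\<forall>z\<in>root_space smul G b. br x z = smul c1 z" using xy(1) unfolding Scal_def by blast
    obtain c2 where c2: "b = 0 \<longrightarrow> c2 = 0" "\<forall>z\<in>root_space smul G b. br y z = smul c2 z" using xy(2) unfolding Scal_def by blast
    show "\<exists>c. (b = 0 \<longrightarrow> c = 0) \<and> (\<forall>z\<in>root_space smul G b. br (x + y) z = smul c z)"
      using c1 c2 by (intro exI[of _ "c1 + c2"]) (auto simp: br_add_l V.scale_left_distrib)
  qed
next
  fix k x assume x: "x \<in> Scal"
  show "smul k x \<in> Scal" unfolding Scal_def
  proof (intro CollectI allI)
    fix b
    obtain c1 where c1: "b = 0 \<longrightarrow> c1 = 0" "\<forall>z\<in>root_space smul G b. br x z = smul c1 z" using x unfolding Scal_def by blast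
    show "\<exists>c. (b = 0 \<longrightarrow> c = 0) \<and> (\<forall>z\<in>root_space smul G b. br (smul k x) z = smul c z)"
      using c1 by (intro exI[of _ "k * c1"]) (auto simp: br_smul_l)
  qed
qed

lemma Scal_act: "s \<in> Scal \<Longrightarrow> \<exists>c. (b = 0 \<longrightarrow> c = 0) \<and> (\<forall>x\<in>root_space smul G b. br s x = smul c x)"
  unfolding Scal_def by blast

lemma G_nonzero_root: assumes "G a l \<noteq> {0}" shows "a \<in> \<Delta>"
  using G_notin assms by blast

lemma brk_scal: assumes "\<alpha> \<noteq> 0" "e \<in> G \<alpha> \<mu>" "f \<in> G (- \<alpha>) (- \<mu>)" shows "br e f \<in> Scal"
proof (cases "G \<alpha> \<mu> = {0}")
  case True
  then have "e = 0" using assms by auto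
  then show ?thesis using V.subspace_0[OF Scal_sub] by simp
next
  case False
  then have a: "\<alpha> \<in> \<Delta> - {0}" using G_nonzero_root assms by blast
  obtain e0 f0 where ef: "G \<alpha> \<mu> = range (\<lambda>c. smul c e0)" "G (- \<alpha>) (- \<mu>) = range (\<lambda>c. smul c f0)"
    "\<forall>b\<in>int_span \<Delta>. \<forall>x\<in>root_space smul G b. br (br e0 f0) x = smul (of_int (coroot_pair b \<alpha>)) x"
    using LT2[OF a False] by blast
  obtain c1 c2 where c: "e = smul c1 e0" "f = smul c2 f0" using ef assms by blast
  have eq: "br e f = smul (c1 * c2) (br e0 f0)" using c by (simp add: br_smul_l br_smul_r)
  have "br e0 f0 \<in> Scal" unfolding Scal_def
  proof (intro CollectI allI)
    fix b
    show "\<exists>c. (b = 0 \<longrightarrow> c = 0) \<and> (\<forall>z\<in>root_space smul G b. br (br e0 f0) z = smul c z)"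
    proof (cases "b \<in> int_span \<Delta>")
      case True
      then show ?thesis using ef(3) by (intro exI[of _ "of_int (coroot_pair b \<alpha>)"]) auto
    next
      case False
      then show ?thesis using rs_out by (intro exI[of _ 0]) auto
    qed
  qed
  then show ?thesis unfolding eq by (rule V.subspace_scale[OF Scal_sub])
qed

definition GenA :: "'L set" where "GenA = {x. \<exists>\<alpha> \<mu>. \<alpha> \<noteq> 0 \<and> x \<in> G \<alpha> \<mu>}"
definition GenB :: "'L set" where
  "GenB = {y. \<exists>\<alpha> \<mu> \<nu> e f. \<alpha> \<noteq> 0 \<and> e \<in> G \<alpha> \<mu> \<and> f \<in> G (- \<alpha>) \<nu> \<and> y = br e f}"

abbreviation "MM \<equiv> V.span (GenA \<union> GenB)"

lemma GenB_deg: "y \<in> GenB \<Longrightarrow> \<exists>\<alpha> \<mu> \<nu> e f. \<alpha> \<noteq> 0 \<and> e \<in> G \<alpha> \<mu> \<and> f \<in> G (- \<alpha>) \<nu> \<and> y = br e f \<and> y \<in> G 0 (\<mu> + \<nu>)"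
  unfolding GenB_def using G_br by fastforce

lemma MM_A: "x \<in> G \<alpha> \<mu> \<Longrightarrow> \<alpha> \<noteq> 0 \<Longrightarrow> x \<in> MM"
  by (rule V.span_base) (auto simp: GenA_def)
lemma MM_B: "e \<in> G \<alpha> \<mu> \<Longrightarrow> f \<in> G (- \<alpha>) \<nu> \<Longrightarrow> \<alpha> \<noteq> 0 \<Longrightarrow> br e f \<in> MM"
  by (rule V.span_base, rule UnI2) (unfold GenB_def, blast)

lemma br_G0_G: assumes "x \<in> G 0 l" "y \<in> G \<alpha> \<mu>" shows "br x y \<in> G \<alpha> (l + \<mu>)"
  using G_br[OF assms] by simp
lemma br_G_G0: assumes "y \<in> G \<alpha> \<mu>" "x \<in> G 0 l" shows "br y x \<in> G \<alpha> (\<mu> + l)"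
  using G_br[OF assms] by simp

lemma Gen_closed: assumes "x \<in> GenA \<union> GenB" "y \<in> GenA \<union> GenB" shows "br x y \<in> MM"
proof -
  { fix x y assume x: "x \<in> GenA" and y: "y \<in> GenA"
    then obtain \<alpha> \<mu> \<beta> \<nu> where g: "\<alpha> \<noteq> 0" "x \<in> G \<alpha> \<mu>" "\<beta> \<noteq> 0" "y \<in> G \<beta> \<nu>" unfolding GenA_def by blast
    have "br x y \<in> MM"
    proof (cases "\<alpha> + \<beta> = 0")
      case True
      then have "\<beta> = - \<alpha>" by (simp add: eq_neg_iff_add_eq_0 add.commute)
      then show ?thesis using MM_B g by blast
    next
      case False
      then show ?thesis using MM_A G_br[OF g(2) g(4)] by blast
    qed }
  note AA = this
  { fix x y assume x: "x \<in> GenA" and y: "y \<in> GenB"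
    then obtain \<alpha> \<mu> where g: "\<alpha> \<noteq> 0" "x \<in> G \<alpha> \<mu>" unfolding GenA_def by blast
    obtain \<gamma> \<rho> \<sigma> e f where y': "y \<in> G 0 (\<rho> + \<sigma>)" using GenB_deg[OF y] by blast
    have "br x y \<in> MM" using MM_A[OF br_G_G0[OF g(2) y'] g(1)] . }
  note AB = this
  { fix x y assume x: "x \<in> GenB" and y: "y \<in> GenA"
    then obtain \<alpha> \<mu> where g: "\<alpha> \<noteq> 0" "y \<in> G \<alpha> \<mu>" unfolding GenA_def by blast
    obtain \<rho> \<sigma> where x': "x \<in> G 0 (\<rho> + \<sigma>)" using GenB_deg[OF x] by blast
    have "br x y \<in> MM" using MM_A[OF br_G0_G[OF x' g(2)] g(1)] . }
  note BA = this
  { fix x y assume x: "x \<in> GenB" and y: "y \<in> GenB"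
    obtain \<rho> \<sigma> where x': "x \<in> G 0 (\<rho> + \<sigma>)" using GenB_deg[OF x] by blast
    obtain \<delta> \<tau> \<upsilon> e f where y': "\<delta> \<noteq> 0" "e \<in> G \<delta> \<tau>" "f \<in> G (- \<delta>) \<upsilon>" "y = br e f" using GenB_deg[OF y] by blast
    have "br x y = br (br x e) f + br e (br x f)" unfolding y'(4) by (rule jac)
    moreover have "br (br x e) f \<in> MM" using MM_B[OF br_G0_G[OF x' y'(2)] y'(3) y'(1)] .
    moreover have "br e (br x f) \<in> MM" using MM_B[OF y'(2) br_G0_G[OF x' y'(3)] y'(1)] .
    ultimately have "br x y \<in> MM" using V.span_add by simp }
  note BB = this
  show ?thesis using assms AA AB BA BB by blast
qed

lemma MM_closed: assumes "x \<in> MM" "y \<in> MM" shows "br x y \<in> MM"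
proof -
  have step1: "br x y \<in> MM" if "x \<in> GenA \<union> GenB" "y \<in> MM" for x y
  proof -
    have "V.subspace {y. br x y \<in> MM}"
      by (rule V.subspaceI) (auto simp: br_add_r br_smul_r V.span_zero V.span_add V.span_scale)
    moreover have "GenA \<union> GenB \<subseteq> {y. br x y \<in> MM}" using Gen_closed that(1) by blast
    ultimately show ?thesis using V.span_minimal that(2) by blast
  qed
  have "V.subspace {x. br x y \<in> MM}"
    by (rule V.subspaceI) (auto simp: br_add_l br_smul_l V.span_zero V.span_add V.span_scale)
  moreover have "GenA \<union> GenB \<subseteq> {x. br x y \<in> MM}" using step1 assms(2) by blast
  ultimately show ?thesis using V.span_minimal assms(1) by blast
qed

lemma MM_UNIV: "MM = UNIV"
proof -
  have "(\<Union>a\<in>\<Delta> - {0}. root_space smul G a) \<subseteq> MM"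
  proof
    fix x assume "x \<in> (\<Union>a\<in>\<Delta> - {0}. root_space smul G a)"
    then obtain a where a: "a \<in> \<Delta> - {0}" "x \<in> root_space smul G a" by blast
    have "(\<Union>l. G a l) \<subseteq> MM" using MM_A a(1) by blast
    then have "root_space smul G a \<subseteq> MM" unfolding root_space_def
      by (metis V.span_minimal V.subspace_span)
    then show "x \<in> MM" using a by blast
  qed
  then have "lie_generated smul br (\<Union>a\<in>\<Delta> - {0}. root_space smul G a) \<subseteq> MM"
    unfolding lie_generated_def using MM_closed by blast
  then show ?thesis using LT3 by blast
qed

lemma G00_Scal: assumes "s \<in> G 0 0" shows "s \<in> Scal"
proof -
  have sub: "V.subspace {z. proj (0,0) z \<in> Scal}"
    by (rule V.subspaceI) (auto simp: proj_add proj_smul V.subspace_0[OF Scal_sub] V.subspace_add[OF Scal_sub] V.subspace_scale[OF Scal_sub])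
  have "GenA \<union> GenB \<subseteq> {z. proj (0,0) z \<in> Scal}"
  proof
    fix z assume z: "z \<in> GenA \<union> GenB"
    show "z \<in> {z. proj (0,0) z \<in> Scal}"
    proof (cases "z \<in> GenA")
      case True
      then obtain \<alpha> \<mu> where "\<alpha> \<noteq> 0" "z \<in> G \<alpha> \<mu>" unfolding GenA_def by blast
      then have "proj (0,0) z = 0" using proj_G by simp
      then show ?thesis using V.subspace_0[OF Scal_sub] by simp
    next
      case False
      then have "z \<in> GenB" using z by blast
      then obtain \<alpha> \<mu> \<nu> e f where g: "\<alpha> \<noteq> 0" "e \<in> G \<alpha> \<mu>" "f \<in> G (- \<alpha>) \<nu>" "z = br e f" "z \<in> G 0 (\<mu> + \<nu>)"
        using GenB_deg by blast
      show ?thesis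
      proof (cases "\<mu> + \<nu> = 0")
        case True
        then have "\<nu> = - \<mu>" by (simp add: eq_neg_iff_add_eq_0 add.commute)
        then have "z \<in> Scal" using brk_scal g by blast
        moreover have "proj (0,0) z = z" using proj_G[OF g(5)] True by simp
        ultimately show ?thesis by simp
      next
        case False
        then have "proj (0,0) z = 0" using proj_G[OF g(5)] by auto
        then show ?thesis using V.subspace_0[OF Scal_sub] by simp
      qed
    qed
  qed
  then have "MM \<subseteq> {z. proj (0,0) z \<in> Scal}" using V.span_minimal sub by blast
  then have "proj (0,0) s \<in> Scal" using MM_UNIV by blast
  moreover have "proj (0,0) s = s" using proj_G[OF assms] by simp
  ultimately show ?thesis by simp
qed


definition Bs :: "'r \<times> (nat \<Rightarrow> int) \<Rightarrow> 'L set" where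
  "Bs i = (SOME B. B \<subseteq> G (fst i) (snd i) \<and> V.independent B \<and> G (fst i) (snd i) \<subseteq> V.span B)"

lemma Bs: "Bs i \<subseteq> G (fst i) (snd i) \<and> V.independent (Bs i) \<and> G (fst i) (snd i) \<subseteq> V.span (Bs i)"
  unfolding Bs_def by (rule someI_ex) (metis V.basis_exists)

lemma Bs_proj: assumes "v \<in> Bs j" shows "proj i v = (if i = j then v else 0)"
proof -
  have "v \<in> G (fst j) (snd j)" using Bs assms by blast
  then show ?thesis using proj_G by auto
qed

lemma Bs_nz: "v \<in> Bs j \<Longrightarrow> v \<noteq> 0" using Bs V.dependent_zero by blast

lemma Bs_disj: assumes "v \<in> Bs j" "v \<in> Bs i" shows "i = j"
  using Bs_proj[OF assms(1), of i] Bs_proj[OF assms(2), of i] Bs_nz[OF assms(1)] by (auto split: if_splits)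

definition BB :: "'L set" where "BB = (\<Union>i. Bs i)"

lemma BB_indep: "V.independent BB"
  unfolding V.dependent_explicit
proof clarify
  fix t u v0 assume t: "finite t" "t \<subseteq> BB" "(\<Sum>v\<in>t. smul (u v) v) = 0" "v0 \<in> t" "u v0 \<noteq> 0"
  obtain i0 where i0: "v0 \<in> Bs i0" using t unfolding BB_def by blast
  have "0 = proj i0 (\<Sum>v\<in>t. smul (u v) v)" using t by simp
  also have "\<dots> = (\<Sum>v\<in>t. smul (u v) (proj i0 v))" unfolding proj_sum proj_smul ..
  also have "\<dots> = (\<Sum>v\<in>t. if v \<in> Bs i0 then smul (u v) v else 0)"
  proof (rule sum.cong[OF refl])
    fix v assume "v \<in> t"
    then obtain j where j: "v \<in> Bs j" using t unfolding BB_def by blast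
    show "smul (u v) (proj i0 v) = (if v \<in> Bs i0 then smul (u v) v else 0)"
    proof (cases "v \<in> Bs i0")
      case True
      then have "i0 = j" using Bs_disj[OF j] by blast
      then show ?thesis using Bs_proj[OF j, of i0] True by simp
    next
      case False
      then have "i0 \<noteq> j" using j by blast
      then show ?thesis using Bs_proj[OF j, of i0] False by simp
    qed
  qed
  also have "\<dots> = (\<Sum>v\<in>t \<inter> Bs i0. smul (u v) v)" by (rule sum.inter_restrict[OF t(1), symmetric])
  finally have "(\<Sum>v\<in>t \<inter> Bs i0. smul (u v) v) = 0" by simp
  moreover have "V.independent (Bs i0)" using Bs by blast
  moreover have "finite (t \<inter> Bs i0)" using t(1) by simp
  moreover have "v0 \<in> t \<inter> Bs i0" using t i0 by simp
  ultimately have "u v0 = 0" using V.independentD[of "Bs i0" "t \<inter> Bs i0" u v0] by simp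
  then show False using t by simp
qed

lemma BB_span: "V.span BB = UNIV"
proof -
  have "(\<Union>a l. G a l) \<subseteq> V.span BB"
  proof clarify
    fix x a l assume x: "x \<in> G a l"
    have "G a l \<subseteq> V.span (Bs (a,l))" using Bs[of "(a,l)"] by simp
    also have "\<dots> \<subseteq> V.span BB" by (rule V.span_mono) (auto simp: BB_def)
    finally show "x \<in> V.span BB" using x by blast
  qed
  then have "V.span (\<Union>a l. G a l) \<subseteq> V.span BB" by (metis V.span_minimal V.subspace_span)
  then show ?thesis using G_span by blast
qed

lemma BB_G: "v \<in> BB \<Longrightarrow> \<exists>a l. v \<in> G a l"
  unfolding BB_def using Bs by fastforce

lemma split_toral_G00: "split_toral smul br (G 0 0)"
  unfolding split_toral_def
proof (intro conjI)
  show "V.subspace (G 0 0)" by (rule G_sub)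
  show "\<forall>a\<in>G 0 0. \<forall>b\<in>G 0 0. br a b = 0"
  proof (intro ballI)
    fix a b assume "a \<in> G 0 0" "b \<in> G 0 0"
    then obtain c where "0 = (0::'r) \<longrightarrow> c = 0" "\<forall>x\<in>root_space smul G 0. br a x = smul c x"
      using G00_Scal Scal_act by blast
    then show "br a b = 0" using G_root[OF \<open>b \<in> G 0 0\<close>] by simp
  qed
  show "\<exists>B. V.independent B \<and> V.span B = UNIV \<and> (\<forall>b\<in>B. \<forall>t\<in>G 0 0. \<exists>c. br t b = smul c b)"
  proof (intro exI conjI)
    show "V.independent BB" by (rule BB_indep)
    show "V.span BB = UNIV" by (rule BB_span)
    show "\<forall>b\<in>BB. \<forall>t\<in>G 0 0. \<exists>c. br t b = smul c b"
    proof (intro ballI)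
      fix b t assume b: "b \<in> BB" and t: "t \<in> G 0 0"
      obtain a l where "b \<in> G a l" using BB_G b by blast
      then have "b \<in> root_space smul G a" by (rule G_root)
      then show "\<exists>c. br t b = smul c b" using Scal_act[OF G00_Scal[OF t], of a] by blast
    qed
  qed
qed



lemma fp_0[simp]: "(br t ^^ k) 0 = 0"
  by (induction k) auto
lemma fp_add: "(br t ^^ k) (x + y) = (br t ^^ k) x + (br t ^^ k) y"
  by (induction k) (auto simp: br_add_r)
lemma fp_smul: "(br t ^^ k) (smul c x) = smul c ((br t ^^ k) x)"
  by (induction k) (auto simp: br_smul_r)
lemma fp_neg: "(br t ^^ k) (- x) = - (br t ^^ k) x"
  by (induction k) (auto simp: br_neg_r)
lemma fp_diff: "(br t ^^ k) (x - y) = (br t ^^ k) x - (br t ^^ k) y"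
  by (induction k) (auto simp: br_diff_r)
lemma fp_sum: "(br t ^^ k) (sum f S) = (\<Sum>i\<in>S. (br t ^^ k) (f i))"
  by (induction S rule: infinite_finite_induct) (auto simp: fp_add)
lemma fp_Suc': "(br t ^^ Suc k) x = (br t ^^ k) (br t x)"
  by (simp add: funpow_Suc_right del: funpow.simps)
lemma fp_plus: "(br t ^^ (m + k)) x = (br t ^^ m) ((br t ^^ k) x)"
  by (simp add: funpow_add)
lemma fp_ge: assumes "(br t ^^ k) x = 0" "k \<le> m" shows "(br t ^^ m) x = 0"
proof -
  obtain d where "m = d + k" using assms(2) by (metis le_add_diff_inverse2)
  then show ?thesis using fp_plus[of d k t x] assms(1) by simp
qed

lemma nil_sum: assumes "finite S" "\<forall>i\<in>S. \<exists>N. (br t ^^ N) (f i) = 0"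
  shows "\<exists>N. (br t ^^ N) (sum f S) = 0"
  using assms
proof (induction S rule: finite_induct)
  case empty then show ?case by (auto intro: exI[of _ 0])
next
  case (insert i S)
  obtain N1 where N1: "(br t ^^ N1) (f i) = 0" using insert by blast
  obtain N2 where N2: "(br t ^^ N2) (sum f S) = 0" using insert by blast
  have "(br t ^^ (N1 + N2)) (f i) = 0" using fp_ge[OF N1] by simp
  moreover have "(br t ^^ (N1 + N2)) (sum f S) = 0" using fp_ge[OF N2] by simp
  ultimately show ?case using insert by (auto simp: fp_add intro!: exI[of _ "N1 + N2"])
qed

lemma nil_from_G: assumes "\<And>a l x. x \<in> G a l \<Longrightarrow> \<exists>N. (br t ^^ N) x = 0"
  shows "\<exists>N. (br t ^^ N) x = 0"
proof -
  have "\<exists>N. (br t ^^ N) (\<Sum>i\<in>supp x. proj i x) = 0"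
    by (rule nil_sum[OF supp_finite]) (use assms proj_mem in blast)
  then show ?thesis using decomp_supp[of x] by simp
qed

section \<open>sl2 lemma\<close>

lemma sl2:
  assumes ef: "br e f = h" and hf: "br h f = smul (- 2) f" and hv: "br h v = smul m v"
    and ev: "br e v = 0" and K: "(br f ^^ K) v = 0" and m: "\<forall>j::nat. m \<noteq> of_nat j"
  shows "v = 0"
proof -
  have P: "br h ((br f ^^ j) v) = smul (m - 2 * of_nat j) ((br f ^^ j) v)" for j
  proof (induction j)
    case 0 then show ?case using hv by simp
  next
    case (Suc j)
    have "br h ((br f ^^ Suc j) v) = br (br h f) ((br f ^^ j) v) + br f (br h ((br f ^^ j) v))"
      unfolding funpow.simps comp_apply by (rule jac)
    also have "\<dots> = smul (- 2) ((br f ^^ Suc j) v) + smul (m - 2 * of_nat j) ((br f ^^ Suc j) v)"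
      using Suc by (simp add: hf br_smul_l br_smul_r br_neg_l)
    also have "\<dots> = smul ((- 2) + (m - 2 * of_nat j)) ((br f ^^ Suc j) v)"
      by (simp only: V.scale_left_distrib)
    also have "(- 2) + (m - 2 * of_nat j) = m - 2 * of_nat (Suc j)"
      by (simp add: algebra_simps)
    finally show ?case .
  qed
  have Q: "br e ((br f ^^ Suc j) v) = smul (of_nat (Suc j) * (m - of_nat j)) ((br f ^^ j) v)" for j
  proof (induction j)
    case 0
    have "br e (br f v) = br (br e f) v + br f (br e v)" by (rule jac)
    then show ?case using ef hv ev by simp
  next
    case (Suc j)
    let ?w = "(br f ^^ Suc j) v"
    have "br e ((br f ^^ Suc (Suc j)) v) = br (br e f) ?w + br f (br e ?w)"
      unfolding funpow.simps comp_apply by (rule jac)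
    also have "\<dots> = smul (m - 2 * of_nat (Suc j)) ?w + smul (of_nat (Suc j) * (m - of_nat j)) ?w"
      using Suc P[of "Suc j"] ef by (simp add: br_smul_r)
    also have "\<dots> = smul ((m - 2 * of_nat (Suc j)) + of_nat (Suc j) * (m - of_nat j)) ?w"
      by (simp only: V.scale_left_distrib)
    also have "(m - 2 * of_nat (Suc j)) + of_nat (Suc j) * (m - of_nat j) = of_nat (Suc (Suc j)) * (m - of_nat (Suc j))"
      by (simp add: algebra_simps)
    finally show ?case .
  qed
  have down: "(br f ^^ j) v = 0" if "(br f ^^ Suc j) v = 0" for j
  proof -
    have "smul (of_nat (Suc j) * (m - of_nat j)) ((br f ^^ j) v) = 0"
      using Q[of j] that by simp
    moreover have "of_nat (Suc j) * (m - of_nat j) \<noteq> (0::'k)"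
      using m by (simp del: of_nat_Suc)
    ultimately show ?thesis by simp
  qed
  have "(br f ^^ (K - i)) v = 0" for i
  proof (induction i)
    case 0 then show ?case using K by simp
  next
    case (Suc i)
    show ?case
    proof (cases "K - i = 0")
      case True then show ?thesis using Suc by simp
    next
      case False
      then have "K - i = Suc (K - Suc i)" by simp
      then show ?thesis using down Suc by metis
    qed
  qed
  from this[of K] show ?thesis by simp
qed

section \<open>Weyl-type lemma\<close>

lemma weyl:
  assumes comm: "\<And>v. v \<in> W \<Longrightarrow> br a (br b v) = br b (br a v) + smul c v"
    and inv: "\<And>v. v \<in> W \<Longrightarrow> br a v \<in> W"
    and N: "\<And>v. v \<in> W \<Longrightarrow> br b v \<in> W \<Longrightarrow> (br a ^^ N) v = 0"
    and Winvb: "\<And>v. v \<in> W \<Longrightarrow> br b v \<in> W"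
    and c: "c \<noteq> 0"
  shows "v \<in> W \<Longrightarrow> v = 0"
proof -
  have I: "(br a ^^ Suc k) (br b v) = br b ((br a ^^ Suc k) v) + smul (of_nat (Suc k) * c) ((br a ^^ k) v)"
    if "v \<in> W" for k v
    using that
  proof (induction k arbitrary: v)
    case 0 then show ?case using comm by simp
  next
    case (Suc k)
    have w: "br a v \<in> W" using inv Suc.prems by blast
    have "(br a ^^ Suc (Suc k)) (br b v) = (br a ^^ Suc k) (br a (br b v))" by (rule fp_Suc')
    also have "\<dots> = (br a ^^ Suc k) (br b (br a v)) + smul c ((br a ^^ Suc k) v)"
      using comm[OF Suc.prems] by (simp add: fp_add fp_smul del: funpow.simps)
    also have "\<dots> = br b ((br a ^^ Suc k) (br a v)) + smul (of_nat (Suc k) * c) ((br a ^^ k) (br a v)) + smul c ((br a ^^ Suc k) v)"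
      using Suc.IH[OF w] by simp
    also have "\<dots> = br b ((br a ^^ Suc (Suc k)) v) + (smul (of_nat (Suc k) * c) ((br a ^^ Suc k) v) + smul c ((br a ^^ Suc k) v))"
      by (simp only: fp_Suc'[symmetric] add.assoc)
    also have "\<dots> = br b ((br a ^^ Suc (Suc k)) v) + smul (of_nat (Suc k) * c + c) ((br a ^^ Suc k) v)"
      by (simp only: V.scale_left_distrib)
    also have "of_nat (Suc k) * c + c = of_nat (Suc (Suc k)) * c"
      by (simp add: algebra_simps)
    finally show ?case .
  qed
  have down: "\<forall>v\<in>W. (br a ^^ k) v = 0" if "\<forall>v\<in>W. (br a ^^ Suc k) v = 0" for k
  proof
    fix v assume v: "v \<in> W"
    have "smul (of_nat (Suc k) * c) ((br a ^^ k) v) = 0"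
      using I[OF v, of k] that v Winvb by simp
    moreover have "of_nat (Suc k) * c \<noteq> 0" using c by (simp del: of_nat_Suc)
    ultimately show "(br a ^^ k) v = 0" by simp
  qed
  have "\<forall>v\<in>W. (br a ^^ (N - i)) v = 0" for i
  proof (induction i)
    case 0 then show ?case using N Winvb by simp
  next
    case (Suc i)
    show ?case
    proof (cases "N - i = 0")
      case True then show ?thesis using Suc by simp
    next
      case False
      then have "N - i = Suc (N - Suc i)" by simp
      then show ?thesis using down Suc by metis
    qed
  qed
  from this[of N] show "v \<in> W \<Longrightarrow> v = 0" by simp
qed



section \<open>Filtrations\<close>

definition Fil :: "((nat \<Rightarrow> int) \<Rightarrow> int) \<Rightarrow> int \<Rightarrow> 'L set" where
  "Fil \<psi> d = {x. \<forall>i. proj i x \<noteq> 0 \<longrightarrow> \<psi> (snd i) \<le> d}"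
definition Hom :: "((nat \<Rightarrow> int) \<Rightarrow> int) \<Rightarrow> int \<Rightarrow> 'L set" where
  "Hom \<psi> d = {x. \<forall>i. proj i x \<noteq> 0 \<longrightarrow> \<psi> (snd i) = d}"

lemma Fil_sub: "V.subspace (Fil \<psi> d)"
  unfolding Fil_def
proof (rule V.subspaceI)
  fix x y assume "x \<in> {x. \<forall>i. proj i x \<noteq> 0 \<longrightarrow> \<psi> (snd i) \<le> d}" "y \<in> {x. \<forall>i. proj i x \<noteq> 0 \<longrightarrow> \<psi> (snd i) \<le> d}"
  then show "x + y \<in> {x. \<forall>i. proj i x \<noteq> 0 \<longrightarrow> \<psi> (snd i) \<le> d}"
    by (auto simp: proj_add) (metis add.right_neutral)
next
  fix c x assume "x \<in> {x. \<forall>i. proj i x \<noteq> 0 \<longrightarrow> \<psi> (snd i) \<le> d}"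
  then show "smul c x \<in> {x. \<forall>i. proj i x \<noteq> 0 \<longrightarrow> \<psi> (snd i) \<le> d}"
    by (auto simp: proj_smul)
qed simp

lemma Hom_sub: "V.subspace (Hom \<psi> d)"
  unfolding Hom_def
proof (rule V.subspaceI)
  fix x y assume "x \<in> {x. \<forall>i. proj i x \<noteq> 0 \<longrightarrow> \<psi> (snd i) = d}" "y \<in> {x. \<forall>i. proj i x \<noteq> 0 \<longrightarrow> \<psi> (snd i) = d}"
  then show "x + y \<in> {x. \<forall>i. proj i x \<noteq> 0 \<longrightarrow> \<psi> (snd i) = d}"
    by (auto simp: proj_add) (metis add.right_neutral)
next
  fix c x assume "x \<in> {x. \<forall>i. proj i x \<noteq> 0 \<longrightarrow> \<psi> (snd i) = d}"
  then show "smul c x \<in> {x. \<forall>i. proj i x \<noteq> 0 \<longrightarrow> \<psi> (snd i) = d}"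
    by (auto simp: proj_smul)
qed simp

lemma Fil_mono: "x \<in> Fil \<psi> d \<Longrightarrow> d \<le> d' \<Longrightarrow> x \<in> Fil \<psi> d'"
  unfolding Fil_def by force
lemma Hom_Fil: "x \<in> Hom \<psi> d \<Longrightarrow> x \<in> Fil \<psi> d"
  unfolding Fil_def Hom_def by force
lemma G_Fil: "x \<in> G a l \<Longrightarrow> \<psi> l \<le> d \<Longrightarrow> x \<in> Fil \<psi> d"
  unfolding Fil_def using proj_G by (auto split: if_splits)
lemma G_Hom: "x \<in> G a l \<Longrightarrow> x \<in> Hom \<psi> (\<psi> l)"
  unfolding Hom_def using proj_G by (auto split: if_splits)
lemma Fil_Hom_0: assumes "x \<in> Fil \<psi> (d - 1)" "x \<in> Hom \<psi> d" shows "x = 0"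
proof (rule zero_proj, rule allI, rule ccontr)
  fix i assume "proj i x \<noteq> 0"
  have "\<forall>i. proj i x \<noteq> 0 \<longrightarrow> \<psi> (snd i) \<le> d - 1" "\<forall>i. proj i x \<noteq> 0 \<longrightarrow> \<psi> (snd i) = d"
    using assms unfolding Fil_def Hom_def by simp_all
  then have "\<psi> (snd i) \<le> d - 1" "\<psi> (snd i) = d" using \<open>proj i x \<noteq> 0\<close> by blast+
  then show False by linarith
qed

lemma br_decomp: "br x y = (\<Sum>i\<in>supp x. \<Sum>j\<in>supp y. br (proj i x) (proj j y))"
proof -
  have "br x y = br (\<Sum>i\<in>supp x. proj i x) (\<Sum>j\<in>supp y. proj j y)"
    using decomp_supp[of x] decomp_supp[of y] by simp
  also have "\<dots> = (\<Sum>i\<in>supp x. \<Sum>j\<in>supp y. br (proj i x) (proj j y))"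
    unfolding br_sum_l by (simp only: br_sum_r)
  finally show ?thesis .
qed

lemma Fil_br: assumes add: "\<forall>l m. \<psi> (l + m) = \<psi> l + \<psi> m" and x: "x \<in> Fil \<psi> d1" and y: "y \<in> Fil \<psi> d2"
  shows "br x y \<in> Fil \<psi> (d1 + d2)"
proof -
  have "(\<Sum>i\<in>supp x. \<Sum>j\<in>supp y. br (proj i x) (proj j y)) \<in> Fil \<psi> (d1 + d2)"
  proof (intro V.subspace_sum[OF Fil_sub])
    fix i j assume i: "i \<in> supp x" and j: "j \<in> supp y"
    have "\<psi> (snd i) \<le> d1" using x i unfolding Fil_def supp_def by blast
    moreover have "\<psi> (snd j) \<le> d2" using y j unfolding Fil_def supp_def by blast
    ultimately have "\<psi> (snd i + snd j) \<le> d1 + d2" using add[rule_format, of "snd i" "snd j"] by linarith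
    moreover have "br (proj i x) (proj j y) \<in> G (fst i + fst j) (snd i + snd j)"
      by (rule G_br[OF proj_mem proj_mem])
    ultimately show "br (proj i x) (proj j y) \<in> Fil \<psi> (d1 + d2)" by (rule G_Fil[rotated])
  qed
  then show ?thesis by (subst br_decomp)
qed

lemma Hom_br: assumes add: "\<forall>l m. \<psi> (l + m) = \<psi> l + \<psi> m" and x: "x \<in> Hom \<psi> d1" and y: "y \<in> Hom \<psi> d2"
  shows "br x y \<in> Hom \<psi> (d1 + d2)"
proof -
  have "(\<Sum>i\<in>supp x. \<Sum>j\<in>supp y. br (proj i x) (proj j y)) \<in> Hom \<psi> (d1 + d2)"
  proof (intro V.subspace_sum[OF Hom_sub])
    fix i j assume i: "i \<in> supp x" and j: "j \<in> supp y"
    have "\<psi> (snd i) = d1" using x i unfolding Hom_def supp_def by blast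
    moreover have "\<psi> (snd j) = d2" using y j unfolding Hom_def supp_def by blast
    ultimately have "\<psi> (snd i + snd j) = d1 + d2" using add[rule_format, of "snd i" "snd j"] by linarith
    moreover have "br (proj i x) (proj j y) \<in> G (fst i + fst j) (snd i + snd j)"
      by (rule G_br[OF proj_mem proj_mem])
    ultimately show "br (proj i x) (proj j y) \<in> Hom \<psi> (d1 + d2)" using G_Hom by metis
  qed
  then show ?thesis by (subst br_decomp)
qed

lemma top_lemma:
  assumes add: "\<forall>l m. \<psi> (l + m) = \<psi> l + \<psi> m"
    and t: "t \<in> Fil \<psi> p" and t': "t' \<in> Hom \<psi> p" and tt: "t - t' \<in> Fil \<psi> (p - 1)"
    and x: "x \<in> Hom \<psi> d"
    and J: "(br t ^^ J) x \<in> Fil \<psi> (d + int J * p - 1)"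
  shows "(br t' ^^ J) x = 0"
proof -
  have A: "(br t' ^^ j) x \<in> Hom \<psi> (d + int j * p)" for j
  proof (induction j)
    case 0 then show ?case using x by simp
  next
    case (Suc j)
    have "br t' ((br t' ^^ j) x) \<in> Hom \<psi> (p + (d + int j * p))" by (rule Hom_br[OF add t' Suc])
    then show ?case by (simp add: algebra_simps)
  qed
  have D: "(br t ^^ j) x - (br t' ^^ j) x \<in> Fil \<psi> (d + int j * p - 1)" for j
  proof (induction j)
    case 0 then show ?case using V.subspace_0[OF Fil_sub] by simp
  next
    case (Suc j)
    have e: "(br t ^^ Suc j) x - (br t' ^^ Suc j) x =
       br t ((br t ^^ j) x - (br t' ^^ j) x) + br (t - t') ((br t' ^^ j) x)"
      by (simp add: br_diff_r br_diff_l)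
    have 1: "br t ((br t ^^ j) x - (br t' ^^ j) x) \<in> Fil \<psi> (p + (d + int j * p - 1))"
      by (rule Fil_br[OF add t Suc])
    have 2: "br (t - t') ((br t' ^^ j) x) \<in> Fil \<psi> ((p - 1) + (d + int j * p))"
      by (rule Fil_br[OF add tt Hom_Fil[OF A]])
    have "p + (d + int j * p - 1) = d + int (Suc j) * p - 1" "(p - 1) + (d + int j * p) = d + int (Suc j) * p - 1"
      by (simp_all add: algebra_simps)
    then show ?case unfolding e using 1 2 V.subspace_add[OF Fil_sub] by metis
  qed
  have "(br t' ^^ J) x = (br t ^^ J) x - ((br t ^^ J) x - (br t' ^^ J) x)" by simp
  also have "\<dots> \<in> Fil \<psi> (d + int J * p - 1)" using J D V.subspace_diff[OF Fil_sub] by blast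
  finally show ?thesis using Fil_Hom_0 A by blast
qed



section \<open>Local finiteness of diagonalizable elements\<close>

lemma locfin_aux:
  assumes eig: "\<forall>b\<in>B. \<exists>c. br t b = smul c b"
  shows "finite F \<Longrightarrow> F \<subseteq> B \<Longrightarrow> x \<in> V.span F \<Longrightarrow> \<exists>J. (br t ^^ J) x \<in> V.span {(br t ^^ j) x | j. j < J}"
proof (induction F arbitrary: x rule: finite_induct)
  case empty
  then have "x = 0" by simp
  then show ?case by (intro exI[of _ 0]) (simp add: V.span_zero)
next
  case (insert b F)
  obtain \<epsilon> where eb: "br t b = smul \<epsilon> b" using eig insert by blast
  obtain k where y: "x - smul k b \<in> V.span F" using insert.prems V.span_breakdown_eq by blast
  define y where "y = x - smul k b"
  have inv: "br t w \<in> V.span F" if "w \<in> V.span F" for w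
  proof -
    have "V.subspace {w. br t w \<in> V.span F}"
      by (rule V.subspaceI) (auto simp: br_add_r br_smul_r V.span_zero V.span_add V.span_scale)
    moreover have "F \<subseteq> {w. br t w \<in> V.span F}"
    proof
      fix b' assume b': "b' \<in> F"
      then obtain c where "br t b' = smul c b'" using eig insert by blast
      then show "b' \<in> {w. br t w \<in> V.span F}" using b' by (simp add: V.span_scale V.span_base)
    qed
    ultimately show ?thesis using V.span_minimal that by blast
  qed
  define z where "z = br t x - smul \<epsilon> x"
  have xe: "x = y + smul k b" unfolding y_def by simp
  have "z = br t y - smul \<epsilon> y"
    unfolding z_def xe by (simp add: br_add_r br_smul_r eb V.scale_right_distrib algebra_simps)
  then have zF: "z \<in> V.span F" using y inv unfolding y_def by (simp add: V.span_diff V.span_scale)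
  obtain J where J: "(br t ^^ J) z \<in> V.span {(br t ^^ j) z | j. j < J}"
    using insert.IH[OF _ zF] insert.prems by blast
  have Tz: "(br t ^^ j) z = (br t ^^ Suc j) x - smul \<epsilon> ((br t ^^ j) x)" for j
    unfolding z_def by (simp add: fp_diff fp_smul funpow_swap1)
  let ?S = "V.span {(br t ^^ j) x | j. j < Suc J}"
  have sub: "V.span {(br t ^^ j) z | j. j < J} \<subseteq> ?S"
  proof (rule V.span_minimal)
    show "V.subspace ?S" by simp
    show "{(br t ^^ j) z | j. j < J} \<subseteq> ?S"
    proof clarify
      fix j assume j: "j < J"
      have jj: "Suc j < Suc J" "j < Suc J" using j by simp_all
      have "(br t ^^ Suc j) x \<in> ?S"
        by (rule V.span_base, rule CollectI, rule exI[of _ "Suc j"], rule conjI[OF refl jj(1)])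
      moreover have "(br t ^^ j) x \<in> ?S"
        by (rule V.span_base, rule CollectI, rule exI[of _ j], rule conjI[OF refl jj(2)])
      ultimately show "(br t ^^ j) z \<in> ?S" unfolding Tz by (simp add: V.span_diff V.span_scale)
    qed
  qed
  have eq: "(br t ^^ Suc J) x = (br t ^^ J) z + smul \<epsilon> ((br t ^^ J) x)" using Tz[of J] by simp
  have xS: "(br t ^^ J) x \<in> ?S"
    by (rule V.span_base, rule CollectI, rule exI[of _ J], rule conjI[OF refl]) simp
  have zS: "(br t ^^ J) z \<in> ?S" using J sub by blast
  have "(br t ^^ J) z + smul \<epsilon> ((br t ^^ J) x) \<in> ?S" by (rule V.span_add[OF zS V.span_scale[OF xS]])
  then have "(br t ^^ Suc J) x \<in> ?S" by (subst eq)
  then show ?case by blast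
qed

lemma locfin:
  assumes "split_toral smul br T'" "t \<in> T'"
  shows "\<exists>J. (br t ^^ J) x \<in> V.span {(br t ^^ j) x | j. j < J}"
proof -
  obtain B where B: "V.span B = UNIV" "\<forall>b\<in>B. \<forall>t\<in>T'. \<exists>c. br t b = smul c b"
    using assms(1) unfolding split_toral_def by blast
  have eig: "\<forall>b\<in>B. \<exists>c. br t b = smul c b" using B(2) assms(2) by blast
  have "x \<in> V.span B" using B(1) by simp
  then obtain F r where F: "finite F" "F \<subseteq> B" "x = (\<Sum>a\<in>F. smul (r a) a)"
    unfolding V.span_explicit by blast
  have "x \<in> V.span F" unfolding F(3) by (intro V.span_sum V.span_scale V.span_base)
  then show ?thesis using locfin_aux[OF eig F(1,2)] by blast
qed

lemma proj_diag:
  assumes "\<And>i. br s (proj i t) = smul (\<phi> (fst i)) (proj i t)"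
  shows "proj i (br s t) = smul (\<phi> (fst i)) (proj i t)"
proof -
  have "br s t = br s (\<Sum>j\<in>supp t. proj j t)" using decomp_supp[of t] by simp
  also have "\<dots> = (\<Sum>j\<in>supp t. smul (\<phi> (fst j)) (proj j t))" by (simp add: br_sum_r assms)
  finally have e: "br s t = (\<Sum>j\<in>supp t. smul (\<phi> (fst j)) (proj j t))" .
  have m: "\<forall>j\<in>supp t. smul (\<phi> (fst j)) (proj j t) \<in> G (fst j) (snd j)" using proj_mem G_smul by blast
  have "proj i (br s t) = (if i \<in> supp t then smul (\<phi> (fst i)) (proj i t) else 0)"
    unfolding e by (rule proj_sumG[OF supp_finite m])
  then show ?thesis by (auto simp: supp_def)
qed

lemma comm_h_L0:
  assumes comm: "\<forall>s\<in>G 0 0. br s t = 0" and nz: "proj (a, l) t \<noteq> 0"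
  shows "a = 0"
proof -
  have Gnz: "G a l \<noteq> {0}" using proj_mem[of "(a,l)" t] nz by auto
  then have aI: "a \<in> int_span \<Delta>" using G_out by blast
  have "\<forall>\<alpha>\<in>\<Delta> - {0}. coroot_pair a \<alpha> = 0"
  proof
    fix \<alpha> assume \<alpha>: "\<alpha> \<in> \<Delta> - {0}"
    have "root_space smul G \<alpha> \<noteq> {0}" using LT1 \<alpha> by blast
    have "\<exists>\<mu>. G \<alpha> \<mu> \<noteq> {0}"
    proof (rule ccontr)
      assume "\<not> (\<exists>\<mu>. G \<alpha> \<mu> \<noteq> {0})"
      then have "(\<Union>l. G \<alpha> l) = {0}" by auto
      then have "root_space smul G \<alpha> = {0}" unfolding root_space_def by simp
      then show False using \<open>root_space smul G \<alpha> \<noteq> {0}\<close> by simp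
    qed
    then obtain \<mu> where \<mu>: "G \<alpha> \<mu> \<noteq> {0}" by blast
    obtain e f where ef: "e \<in> G \<alpha> \<mu>" "f \<in> G (- \<alpha>) (- \<mu>)"
      "\<forall>b\<in>int_span \<Delta>. \<forall>x\<in>root_space smul G b. br (br e f) x = smul (of_int (coroot_pair b \<alpha>)) x"
      using LT2[OF \<alpha> \<mu>] by blast
    have s: "br e f \<in> G 0 0" using G_br[OF ef(1,2)] by simp
    have diag: "br (br e f) (proj i t) = smul (of_int (coroot_pair (fst i) \<alpha>)) (proj i t)" for i
    proof (cases "fst i \<in> int_span \<Delta>")
      case True
      then show ?thesis using ef(3) G_root[OF proj_mem] by blast
    next
      case False
      then have "proj i t = 0" using proj_mem[of i t] G_out by auto
      then show ?thesis by simp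
    qed
    have "proj (a,l) (br (br e f) t) = smul (of_int (coroot_pair a \<alpha>)) (proj (a,l) t)"
      using proj_diag[of "br e f" t "\<lambda>b. of_int (coroot_pair b \<alpha>)", OF diag] by simp
    moreover have "br (br e f) t = 0" using comm s by blast
    ultimately have "smul (of_int (coroot_pair a \<alpha>)) (proj (a,l) t) = 0" by simp
    then have "(of_int (coroot_pair a \<alpha>) :: 'k) = 0" using nz by simp
    then show "coroot_pair a \<alpha> = 0" by simp
  qed
  then show ?thesis using cp_all_zero aI by blast
qed

definition top :: "((nat \<Rightarrow> int) \<Rightarrow> int) \<Rightarrow> int \<Rightarrow> 'L \<Rightarrow> 'L" where
  "top \<psi> p t = (\<Sum>i\<in>{i\<in>supp t. \<psi> (snd i) = p}. proj i t)"

lemma proj_top: "proj i (top \<psi> p t) = (if \<psi> (snd i) = p then proj i t else 0)"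
proof -
  have f: "finite {i\<in>supp t. \<psi> (snd i) = p}" using supp_finite by simp
  have "proj i (top \<psi> p t) = (if i \<in> {i\<in>supp t. \<psi> (snd i) = p} then proj i t else 0)"
    unfolding top_def by (rule proj_sumG[OF f]) (use proj_mem in blast)
  then show ?thesis by (auto simp: supp_def)
qed

lemma supp_top: "supp (top \<psi> p t) = {i\<in>supp t. \<psi> (snd i) = p}"
  unfolding supp_def using proj_top by auto

lemma top_Hom: "top \<psi> p t \<in> Hom \<psi> p"
  unfolding Hom_def using proj_top by auto

lemma top_rest: assumes "t \<in> Fil \<psi> p" shows "t - top \<psi> p t \<in> Fil \<psi> (p - 1)"
  unfolding Fil_def
proof (intro CollectI allI impI)
  fix i assume "proj i (t - top \<psi> p t) \<noteq> 0"
  then have "\<psi> (snd i) \<noteq> p" "proj i t \<noteq> 0" using proj_top[of i \<psi> p t] by (auto simp: proj_diff split: if_splits)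
  moreover have "\<forall>i. proj i t \<noteq> 0 \<longrightarrow> \<psi> (snd i) \<le> p" using assms unfolding Fil_def by simp
  ultimately have "\<psi> (snd i) \<le> p" "\<psi> (snd i) \<noteq> p" by blast+
  then show "\<psi> (snd i) \<le> p - 1" by linarith
qed

lemma Fil_Max: "t \<in> Fil \<psi> (Max ((\<lambda>i. \<psi> (snd i)) ` supp t))"
  unfolding Fil_def
proof (intro CollectI allI impI)
  fix i assume "proj i t \<noteq> 0"
  then have "i \<in> supp t" by (simp add: supp_def)
  then show "\<psi> (snd i) \<le> Max ((\<lambda>i. \<psi> (snd i)) ` supp t)" using supp_finite by simp
qed



definition locnil :: "'L \<Rightarrow> bool" where "locnil t \<longleftrightarrow> (\<forall>x. \<exists>N. (br t ^^ N) x = 0)"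

lemma top_nil:
  assumes add: "\<forall>l m. \<psi> (l + m) = \<psi> l + \<psi> m" and tF: "t \<in> Fil \<psi> p"
    and rel: "\<And>a l x. x \<in> G a l \<Longrightarrow> \<exists>J. (br t ^^ J) x \<in> Fil \<psi> (\<psi> l + int J * p - 1)"
  shows "locnil (top \<psi> p t)"
  unfolding locnil_def
proof
  fix x
  show "\<exists>N. (br (top \<psi> p t) ^^ N) x = 0"
  proof (rule nil_from_G)
    fix a l x assume x: "x \<in> G a l"
    obtain J where J: "(br t ^^ J) x \<in> Fil \<psi> (\<psi> l + int J * p - 1)" using rel[OF x] by blast
    have "(br (top \<psi> p t) ^^ J) x = 0"
      by (rule top_lemma[OF add tF top_Hom top_rest[OF tF] G_Hom[OF x] J])
    then show "\<exists>N. (br (top \<psi> p t) ^^ N) x = 0" by blast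
  qed
qed

lemma Fil_iter: assumes add: "\<forall>l m. \<psi> (l + m) = \<psi> l + \<psi> m" and tF: "t \<in> Fil \<psi> p" and x: "x \<in> G a l"
  shows "(br t ^^ j) x \<in> Fil \<psi> (\<psi> l + int j * p)"
proof (induction j)
  case 0 then show ?case using G_Fil[OF x] by simp
next
  case (Suc j)
  have "br t ((br t ^^ j) x) \<in> Fil \<psi> (p + (\<psi> l + int j * p))" by (rule Fil_br[OF add tF Suc])
  moreover have "p + (\<psi> l + int j * p) = \<psi> l + int (Suc j) * p" by (simp add: algebra_simps)
  ultimately show ?case by simp
qed

lemma step1:
  assumes T': "split_toral smul br T'" and h: "G 0 0 \<subseteq> T'" and t: "t \<in> T'" and nt: "t \<notin> G 0 0"
  shows "\<exists>t1. t1 \<noteq> 0 \<and> (\<forall>i\<in>supp t1. fst i = 0 \<and> snd i \<noteq> 0) \<and> locnil t1"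
proof -
  have comm: "\<forall>s\<in>G 0 0. br s t = 0" using T' h t unfolding split_toral_def by blast
  have fst0: "fst i = 0" if "i \<in> supp t" for i
    using comm_h_L0[OF comm, of "fst i" "snd i"] that by (simp add: supp_def)
  obtain i0 where i0: "i0 \<in> supp t" "snd i0 \<noteq> 0"
  proof -
    have "\<exists>i0\<in>supp t. snd i0 \<noteq> 0"
    proof (rule ccontr)
      assume "\<not> (\<exists>i0\<in>supp t. snd i0 \<noteq> 0)"
      have "supp t \<subseteq> {(0,0)}"
      proof
        fix i assume i: "i \<in> supp t"
        then have "fst i = 0" "snd i = 0" using fst0 \<open>\<not> (\<exists>i0\<in>supp t. snd i0 \<noteq> 0)\<close> by blast+
        then show "i \<in> {(0,0)}" by (simp add: prod_eq_iff)
      qed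
      then have "t = (\<Sum>i\<in>{(0,0)}. proj i t)" by (intro decomp) auto
      then have "t = proj (0,0) t" by simp
      then have "t \<in> G 0 0" using proj_mem[of "(0,0)" t] by simp
      then show False using nt by simp
    qed
    then show ?thesis using that by blast
  qed
  have "\<exists>m. snd i0 m \<noteq> 0"
  proof (rule ccontr)
    assume "\<not> (\<exists>m. snd i0 m \<noteq> 0)"
    then have "snd i0 = 0" by (simp add: fun_eq_iff)
    then show False using i0(2) by simp
  qed
  then obtain m where m: "snd i0 m \<noteq> 0" by blast
  define \<sigma> :: int where "\<sigma> = (if \<exists>i\<in>supp t. snd i m > 0 then 1 else -1)"
  define \<psi> where "\<psi> l = \<sigma> * l m" for l :: "nat \<Rightarrow> int"
  have add: "\<forall>l m. \<psi> (l + m) = \<psi> l + \<psi> m" unfolding \<psi>_def by (simp add: algebra_simps)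
  have psi0: "\<psi> 0 = 0" unfolding \<psi>_def by simp
  obtain i1 where i1: "i1 \<in> supp t" "\<psi> (snd i1) > 0"
  proof (cases "\<exists>i\<in>supp t. snd i m > 0")
    case True
    then obtain i where i: "i \<in> supp t" "snd i m > 0" by blast
    have "\<sigma> = 1" using True unfolding \<sigma>_def by simp
    then have "\<psi> (snd i) > 0" using i(2) unfolding \<psi>_def by simp
    then show ?thesis using that i(1) by blast
  next
    case False
    then have "\<not> snd i0 m > 0" using i0(1) by blast
    then have neg: "snd i0 m < 0" using m by linarith
    have "\<sigma> = -1" using False unfolding \<sigma>_def by simp
    then have "\<psi> (snd i0) > 0" using neg unfolding \<psi>_def by simp
    then show ?thesis using that i0(1) by blast
  qed
  define p where "p = Max ((\<lambda>i. \<psi> (snd i)) ` supp t)"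
  have tF: "t \<in> Fil \<psi> p" unfolding p_def by (rule Fil_Max)
  have ne: "(\<lambda>i. \<psi> (snd i)) ` supp t \<noteq> {}" using i1 by blast
  have "p \<in> (\<lambda>i. \<psi> (snd i)) ` supp t" unfolding p_def using Max_in[OF _ ne] supp_finite by blast
  then obtain i2 where i2: "i2 \<in> supp t" "\<psi> (snd i2) = p" by blast
  have "\<psi> (snd i1) \<le> p" unfolding p_def by (rule Max_ge) (use supp_finite i1 in auto)
  then have p1: "p \<ge> 1" using i1(2) by linarith
  define t1 where "t1 = top \<psi> p t"
  have "proj i2 t1 = proj i2 t" unfolding t1_def using proj_top i2 by simp
  then have t1nz: "t1 \<noteq> 0" using i2(1) by (auto simp: supp_def)
  have inv: "\<forall>i\<in>supp t1. fst i = 0 \<and> snd i \<noteq> 0"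
  proof
    fix i assume "i \<in> supp t1"
    then have "i \<in> supp t" "\<psi> (snd i) = p" unfolding t1_def supp_top by auto
    then show "fst i = 0 \<and> snd i \<noteq> 0" using fst0 psi0 p1 by auto
  qed
  have "locnil t1" unfolding t1_def
  proof (rule top_nil[OF add tF])
    fix a l x assume x: "x \<in> G a l"
    obtain J where J: "(br t ^^ J) x \<in> V.span {(br t ^^ j) x | j. j < J}" using locfin[OF T' t] by blast
    have "V.span {(br t ^^ j) x | j. j < J} \<subseteq> Fil \<psi> (\<psi> l + int J * p - 1)"
    proof (rule V.span_minimal[OF _ Fil_sub], clarify)
      fix j assume j: "j < J"
      have "(br t ^^ j) x \<in> Fil \<psi> (\<psi> l + int j * p)" by (rule Fil_iter[OF add tF x])
      moreover have "\<psi> l + int j * p \<le> \<psi> l + int J * p - 1"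
      proof -
        have "int j + 1 \<le> int J" using j by simp
        then have "(int j + 1) * p \<le> int J * p" using p1 by (intro mult_right_mono) auto
        then show ?thesis using p1 by (simp add: algebra_simps)
      qed
      ultimately show "(br t ^^ j) x \<in> Fil \<psi> (\<psi> l + int J * p - 1)" by (rule Fil_mono)
    qed
    then show "\<exists>J. (br t ^^ J) x \<in> Fil \<psi> (\<psi> l + int J * p - 1)" using J by blast
  qed
  then show ?thesis using t1nz inv by blast
qed

lemma step2:
  "t1 \<noteq> 0 \<Longrightarrow> (\<forall>i\<in>supp t1. fst i = 0 \<and> snd i \<noteq> 0) \<Longrightarrow> locnil t1 \<Longrightarrow>
   \<exists>t0 lam. t0 \<in> G 0 lam \<and> lam \<noteq> 0 \<and> t0 \<noteq> 0 \<and> locnil t0"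
proof (induction "card (supp t1)" arbitrary: t1 rule: less_induct)
  case less
  have sne: "supp t1 \<noteq> {}"
  proof
    assume "supp t1 = {}"
    then have "t1 = 0" using decomp_supp[of t1] by simp
    then show False using less.prems by simp
  qed
  show ?case
  proof (cases "\<exists>i1\<in>supp t1. \<exists>i2\<in>supp t1. i1 \<noteq> i2")
    case False
    obtain i where i: "i \<in> supp t1" using sne by blast
    then have "supp t1 = {i}" using False by blast
    then have "t1 = proj i t1" using decomp_supp[of t1] by simp
    moreover have "fst i = 0" using less.prems(2) i by blast
    ultimately have "t1 \<in> G 0 (snd i)" using proj_mem[of i t1] by simp
    then show ?thesis using less.prems i by blast
  next
    case True
    then obtain i1 i2 where ii: "i1 \<in> supp t1" "i2 \<in> supp t1" "i1 \<noteq> i2" by blast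
    have "fst i1 = 0" "fst i2 = 0" using less.prems(2) ii by blast+
    then have "snd i1 \<noteq> snd i2" using ii(3) by (simp add: prod_eq_iff)
    then obtain m where m: "snd i1 m \<noteq> snd i2 m" by (auto simp: fun_eq_iff)
    define \<psi> where "\<psi> l = l m" for l :: "nat \<Rightarrow> int"
    have add: "\<forall>l m. \<psi> (l + m) = \<psi> l + \<psi> m" unfolding \<psi>_def by simp
    define p where "p = Max ((\<lambda>i. \<psi> (snd i)) ` supp t1)"
    have tF: "t1 \<in> Fil \<psi> p" unfolding p_def by (rule Fil_Max)
    have ne: "(\<lambda>i. \<psi> (snd i)) ` supp t1 \<noteq> {}" using sne by blast
    have "p \<in> (\<lambda>i. \<psi> (snd i)) ` supp t1" unfolding p_def using Max_in[OF _ ne] supp_finite by blast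
    then obtain i3 where i3: "i3 \<in> supp t1" "\<psi> (snd i3) = p" by blast
    define t2 where "t2 = top \<psi> p t1"
    have "proj i3 t2 = proj i3 t1" unfolding t2_def using proj_top i3 by simp
    then have t2nz: "t2 \<noteq> 0" using i3(1) by (auto simp: supp_def)
    have st2: "supp t2 = {i\<in>supp t1. \<psi> (snd i) = p}" unfolding t2_def by (rule supp_top)
    have "supp t2 \<subset> supp t1"
    proof -
      have "\<not> (\<psi> (snd i1) = p \<and> \<psi> (snd i2) = p)" using m unfolding \<psi>_def by auto
      then show ?thesis using st2 ii by auto
    qed
    then have card: "card (supp t2) < card (supp t1)" using psubset_card_mono supp_finite by blast
    have inv: "\<forall>i\<in>supp t2. fst i = 0 \<and> snd i \<noteq> 0" using st2 less.prems(2) by auto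
    have "locnil t2" unfolding t2_def
    proof (rule top_nil[OF add tF])
      fix a l x assume x: "x \<in> G a l"
      obtain N where "(br t1 ^^ N) x = 0" using less.prems(3) unfolding locnil_def by blast
      moreover have "0 \<in> Fil \<psi> (\<psi> l + int N * p - 1)" by (rule V.subspace_0[OF Fil_sub])
      ultimately have "(br t1 ^^ N) x \<in> Fil \<psi> (\<psi> l + int N * p - 1)" by simp
      then show "\<exists>J. (br t1 ^^ J) x \<in> Fil \<psi> (\<psi> l + int J * p - 1)" by (rule exI)
    qed
    then show ?thesis using less.hyps[OF card t2nz inv] by blast
  qed
qed



lemma centroid_comm: assumes c: "c \<in> centroid smul br" shows "(br t ^^ N) (c z) = c ((br t ^^ N) z)"
proof (induction N)
  case 0 then show ?case by simp
next
  case (Suc N)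
  have "c (br t w) = br t (c w)" for w using c unfolding centroid_def by blast
  then show ?case using Suc by simp
qed

lemma centroid_0: assumes c: "c \<in> centroid smul br" shows "c 0 = 0"
proof -
  have "Vector_Spaces.linear smul smul c" using c unfolding centroid_def by blast
  then have "module_hom smul smul c" unfolding Vector_Spaces.linear_iff_module_hom .
  then show ?thesis by (rule module_hom.zero)
qed

lemma nil_set: assumes "finite X" "\<forall>y\<in>X. \<exists>N. (br t ^^ N) y = 0"
  shows "\<exists>N. \<forall>y\<in>X. (br t ^^ N) y = 0"
  using assms
proof (induction X rule: finite_induct)
  case empty then show ?case by simp
next
  case (insert y X)
  obtain N1 where N1: "(br t ^^ N1) y = 0" using insert by blast
  obtain N2 where N2: "\<forall>y\<in>X. (br t ^^ N2) y = 0" using insert by blast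
  have "\<forall>z\<in>insert y X. (br t ^^ (N1 + N2)) z = 0"
    using fp_ge[OF N1, of "N1 + N2"] N2 fp_ge[where k=N2 and m="N1 + N2"] by auto
  then show ?case by blast
qed

lemma global_nil: assumes "locnil t" "fgc smul br" shows "\<exists>N. \<forall>x. (br t ^^ N) x = 0"
proof -
  obtain X where X: "finite X" "\<forall>x. \<exists>c. (\<forall>y\<in>X. c y \<in> centroid smul br) \<and> x = (\<Sum>y\<in>X. c y y)"
    using assms(2) unfolding fgc_def by blast
  obtain N where N: "\<forall>y\<in>X. (br t ^^ N) y = 0"
    using nil_set[OF X(1)] assms(1) unfolding locnil_def by blast
  have "(br t ^^ N) x = 0" for x
  proof -
    obtain c where c: "\<forall>y\<in>X. c y \<in> centroid smul br" "x = (\<Sum>y\<in>X. c y y)" using X(2) by blast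
    have "(br t ^^ N) x = (\<Sum>y\<in>X. (br t ^^ N) (c y y))" unfolding c(2) by (rule fp_sum)
    also have "\<dots> = (\<Sum>y\<in>X. c y ((br t ^^ N) y))" using centroid_comm c(1) by simp
    also have "\<dots> = 0" using N centroid_0 c(1) by (intro sum.neutral) simp
    finally show ?thesis .
  qed
  then show ?thesis by blast
qed

lemma central_of_kill:
  assumes kill: "\<And>a \<nu> x. a \<noteq> 0 \<Longrightarrow> x \<in> G a \<nu> \<Longrightarrow> br t0 x = 0"
  shows "br t0 z = 0"
proof -
  let ?C = "{z. br t0 z = 0}"
  have sub: "V.subspace ?C" by (rule V.subspaceI) (auto simp: br_add_r br_smul_r)
  have "(\<Union>a\<in>\<Delta> - {0}. root_space smul G a) \<subseteq> ?C"
  proof clarify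
    fix a x assume a: "a \<in> \<Delta>" "a \<noteq> 0" and x: "x \<in> root_space smul G a"
    have "(\<Union>l. G a l) \<subseteq> ?C" using kill a(2) by blast
    then have "root_space smul G a \<subseteq> ?C" unfolding root_space_def using V.span_minimal sub by blast
    then show "br t0 x = 0" using x by blast
  qed
  moreover have "\<forall>x\<in>?C. \<forall>y\<in>?C. br x y \<in> ?C"
  proof (intro ballI)
    fix x y assume "x \<in> ?C" "y \<in> ?C"
    then show "br x y \<in> ?C" using jac[of t0 x y] by simp
  qed
  ultimately have "lie_generated smul br (\<Union>a\<in>\<Delta> - {0}. root_space smul G a) \<subseteq> ?C"
    unfolding lie_generated_def using sub by blast
  then show ?thesis using LT3 by blast
qed



lemma neg2_not_nat: "(- 2 :: 'k) \<noteq> of_nat j"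
proof
  assume "(- 2 :: 'k) = of_nat j"
  then have "(of_nat (j + 2) :: 'k) = 0" by simp
  then show False by (simp only: of_nat_eq_0_iff)
qed

lemma multiples_not_in: assumes "a \<noteq> 0" shows "\<exists>j::nat. - (real (Suc j)) *\<^sub>R a \<notin> \<Delta>"
proof (rule ccontr)
  assume "\<not> ?thesis"
  then have sub: "range (\<lambda>j::nat. - (real (Suc j)) *\<^sub>R a) \<subseteq> \<Delta>" by blast
  have "inj (\<lambda>j::nat. - (real (Suc j)) *\<^sub>R a)"
    by (rule injI) (use assms in \<open>simp add: scaleR_cancel_right\<close>)
  then have "infinite (range (\<lambda>j::nat. - (real (Suc j)) *\<^sub>R a))"
    using finite_imageD infinite_UNIV_nat by blast
  then show False using sub Delta_finite finite_subset by blast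
qed

lemma kill_root:
  assumes t0: "t0 \<in> G 0 lam" and nil: "\<forall>x. (br t0 ^^ N) x = 0"
    and a0: "a \<noteq> 0" and x: "x \<in> G a \<nu>"
  shows "br t0 x = 0"
proof (rule ccontr)
  assume nz: "br t0 x \<noteq> 0"
  have deg: "\<exists>l. (br t0 ^^ j) x \<in> G a l" for j
  proof (induction j)
    case 0 then show ?case using x by auto
  next
    case (Suc j)
    then obtain l where "(br t0 ^^ j) x \<in> G a l" by blast
    then have "br t0 ((br t0 ^^ j) x) \<in> G a (lam + l)" by (rule br_G0_G[OF t0])
    then show ?case by auto
  qed
  define j0 where "j0 = (LEAST j. (br t0 ^^ j) x = 0)"
  have j0z: "(br t0 ^^ j0) x = 0" unfolding j0_def by (rule LeastI[of _ N]) (use nil in blast)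
  have xnz: "x \<noteq> 0" using nz by auto
  have j0ne0: "j0 \<noteq> 0" using j0z xnz by (cases j0) auto
  have j0ne1: "j0 \<noteq> 1" using j0z nz by auto
  have "(br t0 ^^ (j0 - 1)) x \<noteq> 0" unfolding j0_def
    by (rule not_less_Least) (use j0ne0 in \<open>simp add: j0_def[symmetric]\<close>)
  define x' where "x' = (br t0 ^^ (j0 - 2)) x"
  define y where "y = br t0 x'"
  have j0eq: "j0 - 1 = Suc (j0 - 2)" "j0 = Suc (Suc (j0 - 2))" using j0ne0 j0ne1 by arith+
  have ynz: "y \<noteq> 0" using \<open>(br t0 ^^ (j0 - 1)) x \<noteq> 0\<close> unfolding y_def x'_def j0eq(1) by simp
  have Ay: "br t0 y = 0" using j0z unfolding y_def x'_def by (subst (asm) j0eq(2)) simp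
  obtain l' where x': "x' \<in> G a l'" using deg unfolding x'_def by blast
  have yG: "y \<in> G a (lam + l')" unfolding y_def by (rule br_G0_G[OF t0 x'])
  have Gnz: "G a (lam + l') \<noteq> {0}" using yG ynz by blast
  have aD: "a \<in> \<Delta> - {0}" using G_nonzero_root[OF Gnz] a0 by blast
  obtain e f where ef: "e \<in> G a (lam + l')" "f \<in> G (- a) (- (lam + l'))"
    "G a (lam + l') = range (\<lambda>c. smul c e)"
    "\<forall>b\<in>int_span \<Delta>. \<forall>x\<in>root_space smul G b. br (br e f) x = smul (of_int (coroot_pair b a)) x"
    using LT2[OF aD Gnz] by blast
  obtain c where c: "y = smul c e" using ef(3) yG by blast
  have cnz: "c \<noteq> 0" using c ynz by auto
  have Ae: "br t0 e = 0"
  proof -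
    have "smul c (br t0 e) = 0" using Ay c by (simp add: br_smul_r)
    then show ?thesis using cnz by simp
  qed
  define h where "h = br e f"
  have aI: "a \<in> int_span \<Delta>" using aD int_span_base by blast
  have act: "br h v = smul (of_int (coroot_pair b a)) v" if "b \<in> int_span \<Delta>" "v \<in> G b l" for b l v
    using ef(4) that G_root unfolding h_def by blast
  have ht0: "br h t0 = 0" using act[OF int_span_0 t0] by simp
  have hf: "br h f = smul (- 2) f" using act[OF int_span_neg[OF aI] ef(2)] cp_neg_self[OF a0] by simp
  define g where "g = br t0 f"
  have gG: "g \<in> G (- a) (lam + - (lam + l'))" unfolding g_def by (rule br_G0_G[OF t0 ef(2)])
  have hg: "br h g = smul (- 2) g" using act[OF int_span_neg[OF aI] gG] cp_neg_self[OF a0] by simp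
  have eg: "br e g = 0"
  proof -
    have "br e g = br (br e t0) f + br t0 (br e f)" unfolding g_def by (rule jac)
    moreover have "br e t0 = 0" using Ae br_anti[of e t0] by simp
    moreover have "br t0 h = 0" using ht0 br_anti[of t0 h] by simp
    ultimately show ?thesis unfolding h_def by simp
  qed
  have fdeg: "\<exists>l. (br f ^^ j) g \<in> G (- (real (Suc j)) *\<^sub>R a) l" for j
  proof (induction j)
    case 0 then show ?case using gG by auto
  next
    case (Suc j)
    then obtain l where l: "(br f ^^ j) g \<in> G (- (real (Suc j)) *\<^sub>R a) l" by blast
    have "br f ((br f ^^ j) g) \<in> G (- a + - (real (Suc j)) *\<^sub>R a) (- (lam + l') + l)"
      by (rule G_br[OF ef(2) l])
    moreover have "- a + - (real (Suc j)) *\<^sub>R a = - (real (Suc (Suc j))) *\<^sub>R a"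
      by (simp add: algebra_simps scaleR_add_left scaleR_2)
    ultimately show ?case by auto
  qed
  obtain K where K: "- (real (Suc K)) *\<^sub>R a \<notin> \<Delta>" using multiples_not_in[OF a0] by blast
  have fK: "(br f ^^ K) g = 0" using fdeg[of K] G_notin[OF K] by auto
  have g0: "g = 0"
    by (rule sl2[of e f h g "- 2" K]) (use h_def hf hg eg fK neg2_not_nat in auto)
  define u where "u = smul (inverse c) (br x' f)"
  have uG: "u \<in> G 0 (l' + - (lam + l'))"
  proof -
    have "br x' f \<in> G (a + - a) (l' + - (lam + l'))" by (rule G_br[OF x' ef(2)])
    then show ?thesis unfolding u_def by (simp add: G_smul)
  qed
  have t0u: "br t0 u = h"
  proof -
    have "br t0 (br x' f) = br (br t0 x') f + br x' (br t0 f)" by (rule jac)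
    also have "\<dots> = smul c h" using g0 unfolding g_def y_def[symmetric] c h_def by (simp add: br_smul_l)
    finally show ?thesis unfolding u_def using cnz by (simp add: br_smul_r)
  qed
  have hu: "br h u = 0" using act[OF int_span_0 uG] by simp
  define W where "W = {v. br h v = smul 2 v}"
  have W0: "v = 0" if "v \<in> W" for v
  proof (rule weyl[of W t0 u 2 N])
    fix v assume v: "v \<in> W"
    have "br t0 (br u v) = br (br t0 u) v + br u (br t0 v)" by (rule jac)
    then show "br t0 (br u v) = br u (br t0 v) + smul 2 v" using v unfolding W_def t0u by (simp add: add.commute)
  next
    fix v assume v: "v \<in> W"
    have "br h (br t0 v) = br (br h t0) v + br t0 (br h v)" by (rule jac)
    then show "br t0 v \<in> W" using v unfolding W_def by (simp add: ht0 br_smul_r)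
  next
    fix v assume v: "v \<in> W"
    have "br h (br u v) = br (br h u) v + br u (br h v)" by (rule jac)
    then show "br u v \<in> W" using v unfolding W_def by (simp add: hu br_smul_r)
  next
    fix v show "(br t0 ^^ N) v = 0" using nil by blast
  next
    show "(2::'k) \<noteq> 0" by simp
  next
    show "v \<in> W" by (rule that)
  qed
  have "y \<in> W" using act[OF aI yG] cp_self[OF a0] unfolding W_def by simp
  then show False using W0 ynz by blast
qed

end

theorem corollary5p5:
  fixes smul :: "'k::field_char_0 \<Rightarrow> 'L::ab_group_add \<Rightarrow> 'L"
    and br :: "'L \<Rightarrow> 'L \<Rightarrow> 'L"
    and \<Delta> :: "'r::euclidean_space set"
    and n :: nat
    and G :: "'r \<Rightarrow> (nat \<Rightarrow> int) \<Rightarrow> 'L set"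
  assumes "lie_torus smul br \<Delta> n G"
    and "fgc smul br"
    and "centreless br"
  shows "maximal_split_toral smul br (G 0 0)"
proof -
  interpret LTctx smul br \<Delta> n G by unfold_locales (rule assms(1))
  show ?thesis unfolding maximal_split_toral_def
  proof (intro conjI allI impI)
    show "split_toral smul br (G 0 0)" by (rule split_toral_G00)
    fix T' assume T': "split_toral smul br T' \<and> G 0 0 \<subseteq> T'"
    show "T' = G 0 0"
    proof
      show "T' \<subseteq> G 0 0"
      proof
        fix t assume t: "t \<in> T'"
        show "t \<in> G 0 0"
        proof (rule ccontr)
          assume nt: "t \<notin> G 0 0"
          obtain t1 where t1: "t1 \<noteq> 0" "\<forall>i\<in>supp t1. fst i = 0 \<and> snd i \<noteq> 0" "locnil t1"
            using step1[OF _ _ t nt] T' by blast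
          obtain t0 lam where t0: "t0 \<in> G 0 lam" "lam \<noteq> 0" "t0 \<noteq> 0" "locnil t0"
            using step2[OF t1] by blast
          obtain N where N: "\<forall>x. (br t0 ^^ N) x = 0" using global_nil[OF t0(4) assms(2)] by blast
          have "br t0 z = 0" for z
            by (rule central_of_kill) (rule kill_root[OF t0(1) N])
          then have "t0 = 0" using assms(3) unfolding centreless_def by blast
          then show False using t0(3) by simp
        qed
      qed
      show "G 0 0 \<subseteq> T'" using T' by blast
    qed
  qed
qed

end
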